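(* Let $p$ be an odd prime and $n=p^{d_1}+\cdots+p^{d_k}$ with integers $0\le d_1<\cdots<d_k$ and $k>1$. Let \[ P:=\{\overline U: U\subsetneq\{p^{d_1},\ldots,p^{d_k}\}\}, \] where $\overline U$ is the sum of the elements of $U$ (so $\overline{\emptyset}=0\in P$), partially ordered by $\overline U\preccurlyeq\overline V$ iff $U\subseteq V$. For $T\subseteq P$ define \[ \chi^B(T):=\sum (-1)^h\,2^{\,k-|U_1|}, \] the sum ranging over all $h\ge0$ and all chains $U_1\subsetneq\cdots\subsetneq U_h\subsetneq U_{h+1}=\{p^{d_1},\ldots,p^{d_k}\}$ with $\overline{U_1},\ldots,\overline{U_h}\in T$ (for $h=0$ the term is $2^{k-k}=1$). Then \[ c^B_{p,i}(n)=\begin{cases} 2^{\,n-2^k+1}\,|\{T\subseteq P:\chi^B(T)\equiv i\pmod p\}| & \text{if } i=0,\\ 2^{\,n-2^k}\,|\{T\subseteq P:\chi^B(T)\equiv i\text{ or }\chi^B(T)\equiv -i\pmod p\}| & \text{otherwise.}\end{cases} \]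
   Context: A signed permutation of $[n]$ is a bijection $w$ of $\{\pm1,\ldots,\pm n\}$ with $w(-i)=-w(i)$; these form $\mathfrak{S}^B_n$. With $w(0):=0$, $D(w)=\{i\in\{0,\ldots,n-1\}: w(i)>w(i+1)\}$. A pseudo-composition of $n$ ($\alpha\models_0 n$) is a sequence $(\alpha_1,\ldots,\alpha_\ell)$ of integers with $\alpha_1\ge0$, $\alpha_2,\ldots,\alpha_\ell>0$ and sum $n$, with $D(\alpha)=\{\alpha_1,\alpha_1+\alpha_2,\ldots,\alpha_1+\cdots+\alpha_{\ell-1}\}$. The type $B$ ribbon number is $r^B_\alpha=|\{w\in\mathfrak{S}^B_n: D(w)=D(\alpha)\}|$ and $c^B_{p,i}(n)=|\{\alpha\models_0 n: r^B_\alpha\equiv i\pmod p\}|$. *)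

theory Defs
  imports "HOL-Number_Theory.Number_Theory"
begin

definition SB :: "nat \<Rightarrow> int set" where
  "SB n = {j::int. 1 \<le> \<bar>j\<bar> \<and> \<bar>j\<bar> \<le> int n}"

text \<open>Signed permutations of [n], represented as functions int => int that are
  bijections of SB n, odd on SB n, and the identity outside SB n (so w 0 = 0).\<close>
definition signed_perms :: "nat \<Rightarrow> (int \<Rightarrow> int) set" where
  "signed_perms n = {w. bij_betw w (SB n) (SB n) \<and> (\<forall>j\<in>SB n. w (-j) = - w j)
                        \<and> (\<forall>j. j \<notin> SB n \<longrightarrow> w j = j)}"

definition descents_B :: "nat \<Rightarrow> (int \<Rightarrow> int) \<Rightarrow> nat set" where
  "descents_B n w = {i. i < n \<and> w (int i) > w (int i + 1)}"

definition pseudo_comp :: "nat \<Rightarrow> nat list \<Rightarrow> bool" where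
  "pseudo_comp n \<alpha> \<longleftrightarrow> \<alpha> \<noteq> [] \<and> (\<forall>x\<in>set (tl \<alpha>). 0 < x) \<and> sum_list \<alpha> = n"

definition comp_descents :: "nat list \<Rightarrow> nat set" where
  "comp_descents \<alpha> = {sum_list (take j \<alpha>) | j. 1 \<le> j \<and> j < length \<alpha>}"

definition ribbonB :: "nat \<Rightarrow> nat list \<Rightarrow> nat" where
  "ribbonB n \<alpha> = card {w \<in> signed_perms n. descents_B n w = comp_descents \<alpha>}"

definition cB :: "nat \<Rightarrow> int \<Rightarrow> nat \<Rightarrow> nat" where
  "cB p i n = card {\<alpha>. pseudo_comp n \<alpha> \<and> [int (ribbonB n \<alpha>) = i] (mod int p)}"

definition chainsB :: "nat set \<Rightarrow> nat set \<Rightarrow> nat set list set" where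
  "chainsB E T = {Us. sorted_wrt (\<subset>) Us \<and> (\<forall>U\<in>set Us. U \<subset> E \<and> \<Sum>U \<in> T)}"

text \<open>chi^B(T); the term of a chain is (-1)^h 2^(k-|U_1|), where for h = 0 we
  take U_1 = U_{h+1} = E, giving 1.\<close>
definition chiB :: "nat set \<Rightarrow> nat set \<Rightarrow> int" where
  "chiB E T = (\<Sum>Us\<in>chainsB E T. (-1) ^ length Us * 2 ^ (card E - card (hd (Us @ [E]))))"

end

theory Submission
  imports Defs
begin

lemma prime_dvd_choose_pow:
  assumes "prime (p::nat)" "0 < j" "j < p^d"
  shows "p dvd (p^d choose j)"
proof (rule ccontr)
  assume nd: "\<not> p dvd (p^d choose j)"
  have cop: "coprime (p^d) (p^d choose j)"
    using nd assms(1) by (simp add: prime_imp_coprime)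
  obtain j' where j': "j = Suc j'" using assms(2) by (cases j) auto
  have pd: "Suc (p^d - 1) = p^d" using assms(1) prime_gt_0_nat by simp
  have eq: "p^d * (p^d - 1 choose (j-1)) = (p^d choose j) * j"
    using Suc_times_binomial_eq[of "p^d - 1" j'] unfolding pd j' by simp
  hence "p^d dvd (p^d choose j) * j" by (metis dvd_triv_left)
  hence "p^d dvd j" using cop by (simp add: coprime_dvd_mult_right_iff)
  thus False using assms by (auto dest: dvd_imp_le)
qed

lemma choose_pow_cong:
  assumes "prime (p::nat)"
  shows "[int (p^d choose j) = (if j = 0 \<or> j = p^d then 1 else 0)] (mod int p)"
proof -
  consider "j = 0" | "j = p^d" | "0 < j \<and> j < p^d" | "j > p^d" by linarith
  thus ?thesis
  proof cases
    case 3
    hence "p dvd (p^d choose j)" using prime_dvd_choose_pow assms by blast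
    hence "int p dvd int (p^d choose j)" by simp
    thus ?thesis using 3 by (auto simp: cong_0_iff)
  qed (auto simp: binomial_eq_0)
qed

lemma choose_sum_cong:
  assumes "prime (p::nat)" "finite U" "U \<subseteq> range (\<lambda>d. p^d)"
  shows "[int (\<Sum>U choose b) = int (card {V. V \<subseteq> U \<and> \<Sum>V = b})] (mod int p)"
  using assms(2,3)
proof (induction U arbitrary: b rule: finite_induct)
  case empty
  have eq: "{V. V \<subseteq> ({}::nat set) \<and> \<Sum>V = b} = (if b = 0 then {{}} else {})" by auto
  show ?case by (simp only: eq) (auto simp: binomial_eq_0)
next
  case (insert u U)
  obtain d where ud: "u = p^d" using insert by auto
  have u0: "u > 0" using ud assms(1) prime_gt_0_nat by simp
  let ?s = "\<Sum>U"
  have "(\<Sum>(insert u U) choose b) = (\<Sum>j\<le>b. (u choose j) * (?s choose (b - j)))"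
    using insert vandermonde[of u ?s b] by simp
  hence e1: "int (\<Sum>(insert u U) choose b) = (\<Sum>j\<le>b. int (u choose j) * int (?s choose (b - j)))"
    by simp
  have c1: "[(\<Sum>j\<le>b. int (u choose j) * int (?s choose (b - j))) = (\<Sum>j\<le>b. (if j = 0 \<or> j = u then 1 else 0) * int (?s choose (b - j)))] (mod int p)"
    by (rule cong_sum, rule cong_mult) (use choose_pow_cong[OF assms(1)] ud in auto)
  have "(\<Sum>j\<le>b. (if j = 0 \<or> j = u then 1 else 0) * int (?s choose (b - j)))
      = (\<Sum>j\<le>b. (if j = 0 then int (?s choose b) else 0) + (if j = u then int (?s choose (b - u)) else 0))"
    by (rule sum.cong) (use u0 in auto)
  also have "\<dots> = int (?s choose b) + (if u \<le> b then int (?s choose (b - u)) else 0)"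
    by (simp add: sum.distrib)
  finally have e2: "(\<Sum>j\<le>b. (if j = 0 \<or> j = u then 1 else 0) * int (?s choose (b - j))) = int (?s choose b) + (if u \<le> b then int (?s choose (b - u)) else 0)" .
  have c2: "[int (?s choose b) + (if u \<le> b then int (?s choose (b - u)) else 0) = int (card {V. V \<subseteq> U \<and> \<Sum>V = b}) + (if u \<le> b then int (card {V. V \<subseteq> U \<and> \<Sum>V = b - u}) else 0)] (mod int p)"
    using insert.prems insert.IH by (intro cong_add) (auto)
  have e3: "int (card {V. V \<subseteq> U \<and> \<Sum>V = b}) + (if u \<le> b then int (card {V. V \<subseteq> U \<and> \<Sum>V = b - u}) else 0)
      = int (card {V. V \<subseteq> insert u U \<and> \<Sum>V = b})"
  proof -
    have fin: "finite {V. V \<subseteq> insert u U}" using insert by simp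
    have split: "{V. V \<subseteq> insert u U \<and> \<Sum>V = b} = {V. V \<subseteq> U \<and> \<Sum>V = b} \<union>
        insert u ` {V. V \<subseteq> U \<and> \<Sum>V = b - u \<and> u \<le> b}"
    proof (intro Set.set_eqI iffI)
      fix V assume "V \<in> {V. V \<subseteq> insert u U \<and> \<Sum>V = b}"
      hence V: "V \<subseteq> insert u U" "\<Sum>V = b" by auto
      show "V \<in> {V. V \<subseteq> U \<and> \<Sum>V = b} \<union> insert u ` {V. V \<subseteq> U \<and> \<Sum>V = b - u \<and> u \<le> b}"
      proof (cases "u \<in> V")
        case True
        have fV: "finite V" using V insert finite_subset by blast
        have "\<Sum>V = u + \<Sum>(V - {u})" using sum.remove[OF fV True, of "\<lambda>x. x"] by simp
        hence "V - {u} \<in> {V. V \<subseteq> U \<and> \<Sum>V = b - u \<and> u \<le> b}" using V by auto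
        thus ?thesis using True by (intro UnI2 image_eqI[where x="V - {u}"]) auto
      next
        case False thus ?thesis using V by auto
      qed
    next
      fix V assume "V \<in> {V. V \<subseteq> U \<and> \<Sum>V = b} \<union> insert u ` {V. V \<subseteq> U \<and> \<Sum>V = b - u \<and> u \<le> b}"
      thus "V \<in> {V. V \<subseteq> insert u U \<and> \<Sum>V = b}"
      proof
        assume "V \<in> insert u ` {V. V \<subseteq> U \<and> \<Sum>V = b - u \<and> u \<le> b}"
        then obtain W where W: "V = insert u W" "W \<subseteq> U" "\<Sum>W = b - u" "u \<le> b" by auto
        have "finite W" using W insert finite_subset by blast
        moreover have "u \<notin> W" using W insert by auto
        ultimately have "\<Sum>V = u + \<Sum>W" using W(1) by simp
        thus ?thesis using W by auto
      qed auto
    qed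
    have disj: "{V. V \<subseteq> U \<and> \<Sum>V = b} \<inter> insert u ` {V. V \<subseteq> U \<and> \<Sum>V = b - u \<and> u \<le> b} = {}"
      using insert by auto
    have inj: "inj_on (insert u) {V. V \<subseteq> U \<and> \<Sum>V = b - u \<and> u \<le> b}"
    proof (rule inj_onI)
      fix V1 V2 assume "V1 \<in> {V. V \<subseteq> U \<and> \<Sum>V = b - u \<and> u \<le> b}" "V2 \<in> {V. V \<subseteq> U \<and> \<Sum>V = b - u \<and> u \<le> b}"
        and e: "insert u V1 = insert u V2"
      hence "u \<notin> V1" "u \<notin> V2" using insert by auto
      thus "V1 = V2" using e by (metis Diff_insert_absorb)
    qed
    have f1: "finite {V. V \<subseteq> U \<and> \<Sum>V = b}" using insert by simp
    have f2: "finite (insert u ` {V. V \<subseteq> U \<and> \<Sum>V = b - u \<and> u \<le> b})" using insert by simp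
    have "card {V. V \<subseteq> insert u U \<and> \<Sum>V = b} = card {V. V \<subseteq> U \<and> \<Sum>V = b} + card {V. V \<subseteq> U \<and> \<Sum>V = b - u \<and> u \<le> b}"
      unfolding split using card_Un_disjoint[OF f1 f2 disj] card_image[OF inj] by simp
    moreover have "{V. V \<subseteq> U \<and> \<Sum>V = b - u \<and> u \<le> b} = (if u \<le> b then {V. V \<subseteq> U \<and> \<Sum>V = b - u} else {})"
      by auto
    ultimately show ?thesis by auto
  qed
  show ?case unfolding e1 using cong_trans[OF c1[unfolded e2] c2] unfolding e3 .
qed

lemma two_pow_cong:
  assumes "prime (p::nat)" "odd p"
  shows "[(2::int) ^ (p^d) = 2] (mod int p)"
proof (induction d)
  case 0 thus ?case by simp
next
  case (Suc d)
  have p2: "p > 2" using assms prime_ge_2_nat[OF assms(1)] by (cases "p = 2") auto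
  have "\<not> p dvd 2" using p2 by (auto dest: dvd_imp_le)
  hence "[2 ^ (p - 1) = 1] (mod p)" using fermat_theorem[OF assms(1)] by simp
  hence "[2 * 2 ^ (p - 1) = 2 * 1] (mod p)" by (rule cong_scalar_left)
  moreover have "(2::nat) ^ p = 2 * 2 ^ (p - 1)" using p2 by (cases p) auto
  ultimately have "[2 ^ p = 2] (mod p)" by simp
  hence "[int (2 ^ p) = int 2] (mod int p)" using cong_int_iff by blast
  hence fp: "[(2::int) ^ p = 2] (mod int p)" by simp
  have "(2::int) ^ (p ^ Suc d) = (2 ^ (p^d)) ^ p" by (simp add: power_mult[symmetric] mult.commute)
  also have "[(2 ^ (p^d)) ^ p = (2::int) ^ p] (mod int p)" using Suc by (rule cong_pow)
  finally show ?case using fp by (rule cong_trans)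
qed

lemma two_pow_sum_cong:
  assumes "prime (p::nat)" "odd p" "finite W" "W \<subseteq> range (\<lambda>d. p^d)"
  shows "[(2::int) ^ (\<Sum>W) = 2 ^ card W] (mod int p)"
  using assms(3,4)
proof (induction W rule: finite_induct)
  case empty thus ?case by simp
next
  case (insert u W)
  obtain d where ud: "u = p^d" using insert by auto
  have "(2::int) ^ (\<Sum>(insert u W)) = 2 ^ u * 2 ^ (\<Sum>W)" using insert by (simp add: power_add)
  moreover have "[2 ^ u * 2 ^ (\<Sum>W) = (2::int) * 2 ^ card W] (mod int p)"
    by (rule cong_mult) (use two_pow_cong[OF assms(1,2)] ud insert in auto)
  ultimately show ?case using insert by simp
qed

definition psum :: "nat \<Rightarrow> nat set \<Rightarrow> nat" where "psum p V = (\<Sum>d\<in>V. p^d)"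

lemma psum_decomp:
  assumes "finite V"
  shows "psum p V = (if 0 \<in> V then 1 else 0) + p * psum p (Suc -` V)"
proof -
  have fV': "finite (Suc -` V)" using assms by (rule finite_vimageI) (simp add: inj_def)
  have Veq: "V = (V \<inter> {0}) \<union> Suc ` (Suc -` V)"
  proof (rule Set.set_eqI)
    fix x show "x \<in> V \<longleftrightarrow> x \<in> (V \<inter> {0}) \<union> Suc ` (Suc -` V)" by (cases x) auto
  qed
  have disj: "(V \<inter> {0}) \<inter> Suc ` (Suc -` V) = {}" by auto
  have "psum p V = (\<Sum>d\<in>V \<inter> {0}. p^d) + (\<Sum>d\<in>Suc ` (Suc -` V). p^d)"
    unfolding psum_def by (subst Veq, rule sum.union_disjoint) (use fV' disj assms in auto)
  also have "(\<Sum>d\<in>V \<inter> {0}. p^d) = (if 0 \<in> V then 1 else 0)" by auto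
  also have "(\<Sum>d\<in>Suc ` (Suc -` V). p^d) = (\<Sum>d\<in>Suc -` V. p^(Suc d))"
    by (rule sum.reindex_cong[where l = Suc]) (auto simp: inj_on_def)
  also have "\<dots> = p * psum p (Suc -` V)" by (simp add: psum_def sum_distrib_left)
  finally show ?thesis .
qed

lemma psum_mod:
  assumes "finite V" "p \<ge> 2"
  shows "psum p V mod p = (if 0 \<in> V then 1 else 0)"
  using psum_decomp[OF assms(1), of p] assms by simp

lemma psum_inj_aux:
  assumes "p \<ge> 2"
  shows "V \<subseteq> {..<N} \<Longrightarrow> W \<subseteq> {..<N} \<Longrightarrow> psum p V = psum p W \<Longrightarrow> V = W"
proof (induction N arbitrary: V W)
  case 0 thus ?case by auto
next
  case (Suc N)
  have fV: "finite V" "finite W" using Suc.prems finite_subset by auto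
  have sub: "Suc -` V \<subseteq> {..<N}" "Suc -` W \<subseteq> {..<N}" using Suc.prems by auto
  have z: "(0 \<in> V) = (0 \<in> W)" using psum_mod[OF fV(1) assms] psum_mod[OF fV(2) assms] Suc.prems(3)
    by (metis assms nat_less_le not_numeral_le_zero one_neq_zero less_2_cases_iff)
  have "(if 0\<in>V then 1 else 0) + p * psum p (Suc -` V) = (if 0\<in>W then 1 else 0) + p * psum p (Suc -` W)"
    using psum_decomp[OF fV(1), of p] psum_decomp[OF fV(2), of p] Suc.prems(3) by metis
  hence "p * psum p (Suc -` V) = p * psum p (Suc -` W)" using z by (simp only: z add_left_cancel)
  hence "psum p (Suc -` V) = psum p (Suc -` W)" using assms by simp
  hence eq: "Suc -` V = Suc -` W" using Suc.IH sub by blast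
  show ?case
  proof (rule Set.set_eqI)
    fix x show "x \<in> V \<longleftrightarrow> x \<in> W"
    proof (cases x)
      case 0 thus ?thesis using z by simp
    next
      case (Suc y) thus ?thesis using eq by (metis vimage_eq)
    qed
  qed
qed

lemma psum_inj:
  assumes "p \<ge> 2" "finite V" "finite W" "psum p V = psum p W"
  shows "V = W"
proof -
  obtain N where "V \<union> W \<subseteq> {..<N}" using assms(2,3) finite_nat_bounded[of "V \<union> W"] by auto
  thus ?thesis using psum_inj_aux[OF assms(1)] assms(4) by auto
qed

lemma sum_pow_image:
  assumes "(p::nat) \<ge> 2"
  shows "\<Sum>((\<lambda>d. p^d) ` V) = psum p V"
proof -
  have "inj_on (\<lambda>d. p^d) V" using assms by (auto simp: inj_on_def)
  thus ?thesis unfolding psum_def by (simp add: sum.reindex)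
qed

lemma sum_inj_PowE:
  assumes "(p::nat) \<ge> 2" "finite D"
  shows "inj_on (\<lambda>U. \<Sum>U) (Pow ((\<lambda>d. p^d) ` D))"
proof (rule inj_onI)
  fix U1 U2 assume U: "U1 \<in> Pow ((\<lambda>d. p^d) ` D)" "U2 \<in> Pow ((\<lambda>d. p^d) ` D)" "\<Sum>U1 = \<Sum>U2"
  obtain V1 where V1: "V1 \<subseteq> D" "U1 = (\<lambda>d. p^d) ` V1" using U(1) by (auto simp: subset_image_iff)
  obtain V2 where V2: "V2 \<subseteq> D" "U2 = (\<lambda>d. p^d) ` V2" using U(2) by (auto simp: subset_image_iff)
  have "psum p V1 = psum p V2" using U(3) V1 V2 sum_pow_image[OF assms(1)] by simp
  moreover have "finite V1" "finite V2" using V1 V2 assms(2) finite_subset by auto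
  ultimately have "V1 = V2" using psum_inj[OF assms(1)] by blast
  thus "U1 = U2" using V1 V2 by simp
qed

lemma sum_mod_PowE:
  assumes "(p::nat) \<ge> 2" "finite D" "U \<subseteq> (\<lambda>d. p^d) ` D"
  shows "\<Sum>U mod p \<le> 1"
proof -
  obtain V where V: "V \<subseteq> D" "U = (\<lambda>d. p^d) ` V" using assms(3) by (auto simp: subset_image_iff)
  have "finite V" using V assms(2) finite_subset by blast
  thus ?thesis using V sum_pow_image[OF assms(1)] psum_mod[OF _ assms(1)] by simp
qed

lemma sum_Pow_parity:
  fixes g :: "bool \<Rightarrow> 'a::comm_semiring_1"
  assumes "finite Q" "Q \<noteq> {}"
  shows "(\<Sum>R\<in>Pow Q. g (even (card R))) = 2 ^ (card Q - 1) * (g True + g False)"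
proof -
  obtain x where x: "x \<in> Q" using assms by auto
  define Q' where "Q' = Q - {x}"
  have Q: "Q = insert x Q'" "x \<notin> Q'" "finite Q'" using x assms Q'_def by auto
  have disj: "Pow Q' \<inter> insert x ` Pow Q' = {}" using Q by auto
  have inj: "inj_on (insert x) (Pow Q')"
  proof (rule inj_onI)
    fix V1 V2 assume "V1 \<in> Pow Q'" "V2 \<in> Pow Q'" and e: "insert x V1 = insert x V2"
    hence "x \<notin> V1" "x \<notin> V2" using Q by auto
    thus "V1 = V2" using e by (metis Diff_insert_absorb)
  qed
  have "(\<Sum>R\<in>Pow Q. g (even (card R))) = (\<Sum>R\<in>Pow Q'. g (even (card R))) + (\<Sum>R\<in>insert x ` Pow Q'. g (even (card R)))"
    unfolding Q(1) Pow_insert by (rule sum.union_disjoint) (use Q disj in auto)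
  also have "(\<Sum>R\<in>insert x ` Pow Q'. g (even (card R))) = (\<Sum>R\<in>Pow Q'. g (even (card (insert x R))))"
    by (rule sum.reindex[OF inj, unfolded comp_def])
  also have "\<dots> = (\<Sum>R\<in>Pow Q'. g (\<not> even (card R)))"
  proof (rule sum.cong)
    fix R assume "R \<in> Pow Q'"
    hence "finite R" "x \<notin> R" using Q finite_subset by auto
    thus "g (even (card (insert x R))) = g (\<not> even (card R))" by simp
  qed simp
  also have "(\<Sum>R\<in>Pow Q'. g (even (card R))) + (\<Sum>R\<in>Pow Q'. g (\<not> even (card R))) = (\<Sum>R\<in>Pow Q'. g True + g False)"
  proof (subst sum.distrib[symmetric], rule sum.cong)
    fix R :: "'b set"
    show "g (even (card R)) + g (\<not> even (card R)) = g True + g False"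
      by (cases "even (card R)") (simp_all add: add.commute)
  qed simp
  also have "\<dots> = 2 ^ (card Q - 1) * (g True + g False)"
    using Q by (simp add: card_Pow)
  finally show ?thesis .
qed

lemma alt_sum_Pow:
  assumes "finite Q"
  shows "(\<Sum>R\<in>Pow Q. (-1::int) ^ card R) = (if Q = {} then 1 else 0)"
proof (cases "Q = {}")
  case False
  have "(\<Sum>R\<in>Pow Q. (-1::int) ^ card R) = (\<Sum>R\<in>Pow Q. (\<lambda>b. if b then 1 else -1) (even (card R)))"
    by (rule sum.cong) auto
  also have "\<dots> = 0" using sum_Pow_parity[OF assms False, of "\<lambda>b. if b then (1::int) else -1"] by simp
  finally show ?thesis using False by simp
qed simp

lemma moebius_Pow:
  fixes a b :: "'x set \<Rightarrow> int"
  assumes "finite S" "\<And>T. T \<subseteq> S \<Longrightarrow> a T = (\<Sum>R\<in>Pow T. b R)"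
  shows "b S = (\<Sum>T\<in>Pow S. (-1) ^ card (S - T) * a T)"
proof -
  have inner: "(\<Sum>T\<in>{T. T \<in> Pow S \<and> R \<subseteq> T}. (-1::int) ^ card (S - T)) = (if R = S then 1 else 0)"
    if R: "R \<subseteq> S" for R
  proof -
    have "(\<Sum>T\<in>{T. T \<in> Pow S \<and> R \<subseteq> T}. (-1::int) ^ card (S - T)) = (\<Sum>W\<in>Pow (S - R). (-1) ^ card W)"
      by (rule sum.reindex_bij_witness[where i = "\<lambda>W. S - W" and j = "\<lambda>T. S - T"]) (use R in auto)
    also have "\<dots> = (if R = S then 1 else 0)" using alt_sum_Pow[of "S - R"] assms(1) R by auto
    finally show ?thesis .
  qed
  have "(\<Sum>T\<in>Pow S. (-1) ^ card (S - T) * a T) = (\<Sum>T\<in>Pow S. \<Sum>R\<in>{R. R \<in> Pow S \<and> R \<subseteq> T}. (-1) ^ card (S - T) * b R)"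
  proof (rule sum.cong)
    fix T assume "T \<in> Pow S"
    hence "a T = (\<Sum>R\<in>Pow T. b R)" "{R. R \<in> Pow S \<and> R \<subseteq> T} = Pow T" using assms(2) by auto
    thus "(-1) ^ card (S - T) * a T = (\<Sum>R\<in>{R. R \<in> Pow S \<and> R \<subseteq> T}. (-1) ^ card (S - T) * b R)"
      by (simp add: sum_distrib_left)
  qed simp
  also have "\<dots> = (\<Sum>R\<in>Pow S. \<Sum>T\<in>{T. T \<in> Pow S \<and> R \<subseteq> T}. (-1) ^ card (S - T) * b R)"
    by (rule sum.swap_restrict) (use assms(1) in auto)
  also have "\<dots> = (\<Sum>R\<in>Pow S. (if R = S then 1 else 0) * b R)"
  proof (rule sum.cong)
    fix R assume R: "R \<in> Pow S"
    have "(\<Sum>T\<in>{T. T \<in> Pow S \<and> R \<subseteq> T}. (-1) ^ card (S - T) * b R) = (\<Sum>T\<in>{T. T \<in> Pow S \<and> R \<subseteq> T}. (-1::int) ^ card (S - T)) * b R"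
      by (simp add: sum_distrib_right)
    also have "\<dots> = (if R = S then 1 else 0) * b R" using inner R by simp
    finally show "(\<Sum>T\<in>{T. T \<in> Pow S \<and> R \<subseteq> T}. (-1) ^ card (S - T) * b R) = (if R = S then 1 else 0) * b R" .
  qed simp
  also have "\<dots> = (\<Sum>R\<in>Pow S. if R = S then b R else 0)" by (rule sum.cong) auto
  also have "\<dots> = b S" using assms(1) by (simp add: sum.delta')
  finally show ?thesis by simp
qed

definition desc :: "int list \<Rightarrow> nat set" where
  "desc xs = {i. i < length xs \<and> (0 # xs) ! i > xs ! i}"

definition LA :: "int set \<Rightarrow> int list set" where
  "LA A = {xs. distinct (map abs xs) \<and> abs ` set xs = A \<and> 0 \<notin> set xs}"

lemma LA_length: "xs \<in> LA A \<Longrightarrow> length xs = card A"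
  unfolding LA_def using distinct_card[of "map abs xs"] by auto

lemma finite_LA: assumes "finite A" shows "finite (LA A)"
proof -
  have "LA A \<subseteq> {xs. set xs \<subseteq> A \<union> uminus ` A \<and> length xs = card A}"
  proof
    fix xs assume xs: "xs \<in> LA A"
    have "set xs \<subseteq> A \<union> uminus ` A"
    proof
      fix x assume "x \<in> set xs"
      hence "abs x \<in> A" using xs unfolding LA_def by auto
      thus "x \<in> A \<union> uminus ` A" by (cases "x \<ge> 0") (auto simp: image_iff intro: bexI[where x="-x"])
    qed
    thus "xs \<in> {xs. set xs \<subseteq> A \<union> uminus ` A \<and> length xs = card A}" using LA_length[OF xs] by simp
  qed
  moreover have "finite {xs. set xs \<subseteq> A \<union> uminus ` A \<and> length xs = card A}"
    by (rule finite_lists_length_eq) (use assms in simp)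
  ultimately show ?thesis by (rule finite_subset)
qed

lemma desc_subset: "desc xs \<subseteq> {..<length xs}"
  unfolding desc_def by auto

lemma sorted_nth_Suc:
  "sorted_wrt (<) (zs::int list) \<longleftrightarrow> (\<forall>j. Suc j < length zs \<longrightarrow> zs ! j < zs ! Suc j)"
  by (rule sorted_wrt_iff_nth_Suc_transp) (auto simp: transp_def)

lemma desc_append:
  assumes "length ys = t" "zs \<noteq> []" "S \<subseteq> {..<t}" "distinct zs"
  shows "desc (ys @ zs) \<subseteq> insert t S \<longleftrightarrow> desc ys \<subseteq> S \<and> sorted_wrt (<) zs"
proof -
  have lo: "i \<in> desc (ys @ zs) \<longleftrightarrow> i \<in> desc ys" if "i < t" for i
  proof -
    have "(0 # ys @ zs) ! i = (0 # ys) ! i" using that assms(1) by (simp add: nth_append nth_Cons split: nat.split)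
    moreover have "(ys @ zs) ! i = ys ! i" using that assms(1) by (simp add: nth_append)
    ultimately show ?thesis using that assms(1) unfolding desc_def by auto
  qed
  have hi: "Suc (t + j) \<in> desc (ys @ zs) \<longleftrightarrow> Suc j < length zs \<and> zs ! j > zs ! Suc j" for j
  proof -
    have "(0 # ys @ zs) ! Suc (t + j) = (ys @ zs) ! (t + j)" by simp
    also have "\<dots> = zs ! j" using assms(1) by (simp add: nth_append)
    finally have a: "(0 # ys @ zs) ! Suc (t + j) = zs ! j" .
    have b: "(ys @ zs) ! Suc (t + j) = zs ! Suc j" using assms(1) by (simp add: nth_append)
    show ?thesis unfolding desc_def using a b assms(1) by auto
  qed
  show ?thesis
  proof
    assume H: "desc (ys @ zs) \<subseteq> insert t S"
    have "desc ys \<subseteq> S"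
    proof
      fix i assume i: "i \<in> desc ys"
      hence "i < t" using desc_subset assms(1) by auto
      thus "i \<in> S" using H lo i by auto
    qed
    moreover have "sorted_wrt (<) zs" unfolding sorted_nth_Suc
    proof (intro allI impI)
      fix j assume j: "Suc j < length zs"
      have "Suc (t + j) \<notin> insert t S" using assms(3) by auto
      hence "Suc (t + j) \<notin> desc (ys @ zs)" using H by auto
      hence "\<not> zs ! j > zs ! Suc j" using hi j by auto
      moreover have "zs ! j \<noteq> zs ! Suc j" using assms(4) j nth_eq_iff_index_eq by fastforce
      ultimately show "zs ! j < zs ! Suc j" by simp
    qed
    ultimately show "desc ys \<subseteq> S \<and> sorted_wrt (<) zs" by simp
  next
    assume H: "desc ys \<subseteq> S \<and> sorted_wrt (<) zs"
    show "desc (ys @ zs) \<subseteq> insert t S"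
    proof
      fix i assume i: "i \<in> desc (ys @ zs)"
      consider "i < t" | "i = t" | j where "i = Suc (t + j)" by (metis add_Suc_right less_imp_Suc_add linorder_neqE_nat)
      thus "i \<in> insert t S"
      proof cases
        case 1 thus ?thesis using lo i H by auto
      next
        case 2 thus ?thesis by simp
      next
        case 3
        hence "Suc j < length zs \<and> zs ! j > zs ! Suc j" using hi i by auto
        thus ?thesis using H unfolding sorted_nth_Suc by force
      qed
    qed
  qed
qed

lemma LA_distinct: "xs \<in> LA A \<Longrightarrow> distinct xs"
  unfolding LA_def by (auto simp: distinct_map)

lemma desc_empty_iff:
  assumes "distinct (0 # xs)"
  shows "desc xs = {} \<longleftrightarrow> sorted_wrt (<) (0 # xs)"
proof -
  have "desc xs = {} \<longleftrightarrow> (\<forall>i. Suc i < length (0 # xs) \<longrightarrow> (0 # xs) ! i < (0 # xs) ! Suc i)"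
  proof
    assume H: "desc xs = {}"
    show "\<forall>i. Suc i < length (0 # xs) \<longrightarrow> (0 # xs) ! i < (0 # xs) ! Suc i"
    proof (intro allI impI)
      fix i assume i: "Suc i < length (0 # xs)"
      hence "\<not> (0 # xs) ! i > xs ! i" using H unfolding desc_def by auto
      moreover have "(0 # xs) ! i \<noteq> (0 # xs) ! Suc i" using nth_eq_iff_index_eq[OF assms, of i "Suc i"] i by simp
      ultimately show "(0 # xs) ! i < (0 # xs) ! Suc i" by simp
    qed
  next
    assume H: "\<forall>i. Suc i < length (0 # xs) \<longrightarrow> (0 # xs) ! i < (0 # xs) ! Suc i"
    show "desc xs = {}" unfolding desc_def using H by fastforce
  qed
  also have "\<dots> \<longleftrightarrow> sorted_wrt (<) (0 # xs)" using sorted_nth_Suc[of "0 # xs"] by simp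
  finally show ?thesis .
qed

lemma LA_desc_empty:
  assumes "finite A" "A \<subseteq> {x. x > 0}"
  shows "{xs \<in> LA A. desc xs = {}} = {sorted_list_of_set A}"
proof (intro Set.set_eqI iffI)
  fix xs assume "xs \<in> {xs \<in> LA A. desc xs = {}}"
  hence xs: "xs \<in> LA A" "desc xs = {}" by auto
  have d: "distinct (0 # xs)" using LA_distinct[OF xs(1)] xs(1) unfolding LA_def by auto
  hence s: "sorted_wrt (<) (0 # xs)" using desc_empty_iff xs(2) by auto
  hence pos: "\<forall>x\<in>set xs. x > 0" by simp
  have "abs ` set xs = id ` set xs" by (rule image_cong) (use pos in auto)
  hence "set xs = abs ` set xs" by simp
  hence se: "set xs = A" using xs(1) unfolding LA_def by simp
  have "sorted_wrt (<) xs" using s by simp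
  hence "sorted_list_of_set A = xs" using se LA_length[OF xs(1)] assms(1)
    by (subst sorted_list_of_set_unique[symmetric]) auto
  thus "xs \<in> {sorted_list_of_set A}" by simp
next
  fix xs assume "xs \<in> {sorted_list_of_set A}"
  hence xs: "xs = sorted_list_of_set A" by simp
  have se: "set xs = A" "sorted_wrt (<) xs" "distinct xs" using xs assms(1) by auto
  have pos: "\<forall>x\<in>set xs. x > 0" using se assms(2) by auto
  have "abs ` set xs = id ` set xs" by (rule image_cong) (use pos in auto)
  hence "abs ` set xs = set xs" by simp
  moreover have "inj_on abs (set xs)" unfolding inj_on_def using pos by (metis abs_of_pos)
  ultimately have "xs \<in> LA A" unfolding LA_def using se pos by (auto simp: distinct_map)
  moreover have "sorted_wrt (<) (0 # xs)" using se pos by simp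
  moreover hence "distinct (0 # xs)" using se pos by auto
  ultimately show "xs \<in> {xs \<in> LA A. desc xs = {}}" using desc_empty_iff by auto
qed

definition sg :: "int set \<Rightarrow> int set \<Rightarrow> int set" where
  "sg B C = (B - C) \<union> uminus ` C"

lemma sorted_LA_count:
  assumes "finite B" "B \<subseteq> {x. x > 0}"
  shows "card {zs \<in> LA B. sorted_wrt (<) zs} = 2 ^ card B"
proof -
  let ?h = "\<lambda>C. sorted_list_of_set (sg B C)"
  have fsg: "finite (sg B C)" if "C \<subseteq> B" for C using that assms(1) unfolding sg_def by (auto intro: finite_subset)
  have rec: "C = {b \<in> B. - b \<in> sg B C}" if "C \<subseteq> B" for C
  proof (intro Set.set_eqI iffI)
    fix x assume "x \<in> C" thus "x \<in> {b \<in> B. - b \<in> sg B C}" using that unfolding sg_def by auto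
  next
    fix x assume x: "x \<in> {b \<in> B. - b \<in> sg B C}"
    hence "x > 0" using assms(2) by auto
    hence "- x \<notin> B" using assms(2) by auto
    hence "- x \<in> uminus ` C" using x unfolding sg_def by auto
    thus "x \<in> C" by auto
  qed
  have img: "{zs \<in> LA B. sorted_wrt (<) zs} = ?h ` Pow B"
  proof (intro Set.set_eqI iffI)
    fix zs assume "zs \<in> {zs \<in> LA B. sorted_wrt (<) zs}"
    hence zs: "zs \<in> LA B" "sorted_wrt (<) zs" by auto
    define C where "C = {b \<in> B. - b \<in> set zs}"
    have dz: "distinct (map abs zs)" "abs ` set zs = B" "0 \<notin> set zs" using zs unfolding LA_def by auto
    have injz: "inj_on abs (set zs)" using dz(1) by (simp add: distinct_map)
    have "set zs = sg B C"
    proof (intro Set.set_eqI iffI)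
      fix x assume x: "x \<in> set zs"
      have ax: "abs x \<in> B" using x dz by auto
      show "x \<in> sg B C"
      proof (cases "x > 0")
        case True
        have "- x \<notin> set zs"
        proof
          assume h: "- x \<in> set zs"
          have "-x = x" by (rule inj_onD[OF injz]) (use h x in auto)
          thus False using True by simp
        qed
        thus ?thesis using True ax unfolding sg_def C_def by auto
      next
        case False
        hence "x < 0" using x dz(3) by (cases "x = 0") auto
        hence "-x \<in> C" using ax x unfolding C_def by auto
        thus ?thesis unfolding sg_def by (auto intro: image_eqI[where x="-x"])
      qed
    next
      fix y assume "y \<in> sg B C"
      thus "y \<in> set zs"
      proof (unfold sg_def, elim UnE)
        assume y: "y \<in> B - C"
        then obtain x where x: "x \<in> set zs" "abs x = y" using dz(2) by auto
        have "y > 0" using y assms(2) by auto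
        show ?thesis
        proof (cases "x = y")
          case False
          hence "x = - y" using x by auto
          hence "y \<in> C" using x y unfolding C_def by auto
          thus ?thesis using y by auto
        qed (use x in auto)
      next
        assume "y \<in> uminus ` C" thus ?thesis unfolding C_def by auto
      qed
    qed
    moreover have "C \<subseteq> B" unfolding C_def by auto
    moreover have "zs = sorted_list_of_set (set zs)"
      using zs(2) by (simp add: sorted_list_of_set_sort_remdups strict_sorted_iff distinct_remdups_id sorted_sort_id)
    ultimately show "zs \<in> ?h ` Pow B" by auto
  next
    fix zs assume "zs \<in> ?h ` Pow B"
    then obtain C where C: "C \<subseteq> B" "zs = ?h C" by auto
    have sz: "set zs = sg B C" "sorted_wrt (<) zs" "distinct zs" using C fsg by auto
    have injsg: "inj_on abs (sg B C)"
    proof (rule inj_onI)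
      fix x y assume xy: "x \<in> sg B C" "y \<in> sg B C" "abs x = abs y"
      show "x = y"
      proof (rule ccontr)
        assume ne: "x \<noteq> y"
        hence "y = - x" using xy(3) by (auto simp: abs_if split: if_splits)
        have posB: "\<And>b. b \<in> B \<Longrightarrow> b > 0" "\<And>b. b \<in> C \<Longrightarrow> b > 0" using assms(2) C(1) by auto
        have cl: "(z > 0 \<and> z \<in> B - C) \<or> (z < 0 \<and> - z \<in> C)" if "z \<in> sg B C" for z
          using that posB unfolding sg_def by force
        have "x \<in> sg B C" "- x \<in> sg B C" using xy(1,2) \<open>y = - x\<close> by auto
        from cl[OF this(1)] cl[OF this(2)] show False by auto
      qed
    qed
    have posB': "\<And>b. b \<in> B \<Longrightarrow> b > 0" using assms(2) by auto
    have "abs ` sg B C = B"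
    proof (intro Set.set_eqI iffI)
      fix z assume "z \<in> abs ` sg B C"
      then obtain w where w: "w \<in> sg B C" "z = abs w" by auto
      thus "z \<in> B"
      proof (unfold sg_def, elim UnE)
        assume "w \<in> B - C" thus ?thesis using w posB'[of w] by auto
      next
        assume "w \<in> uminus ` C" then obtain c where "c \<in> C" "w = - c" by auto
        thus ?thesis using w posB'[of c] C(1) by auto
      qed
    next
      fix b assume b: "b \<in> B"
      show "b \<in> abs ` sg B C"
      proof (cases "b \<in> C")
        case True
        hence "- b \<in> sg B C" unfolding sg_def by auto
        moreover have "abs (- b) = b" using posB'[OF b] by simp
        ultimately show ?thesis by (metis image_eqI)
      next
        case False
        hence "b \<in> sg B C" using b unfolding sg_def by auto
        moreover have "abs b = b" using posB'[OF b] by simp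
        ultimately show ?thesis by (metis image_eqI)
      qed
    qed
    moreover have "0 \<notin> sg B C" using C(1) assms(2) unfolding sg_def by auto
    ultimately show "zs \<in> {zs \<in> LA B. sorted_wrt (<) zs}"
      unfolding LA_def using sz injsg by (auto simp: distinct_map)
  qed
  have inj: "inj_on ?h (Pow B)"
  proof (rule inj_onI)
    fix C1 C2 assume C: "C1 \<in> Pow B" "C2 \<in> Pow B" "?h C1 = ?h C2"
    hence "sg B C1 = sg B C2" using fsg by (metis PowD sorted_list_of_set.set_sorted_key_list_of_set)
    thus "C1 = C2" using rec C by (metis PowD)
  qed
  show ?thesis unfolding img using card_image[OF inj] card_Pow assms(1) by simp
qed


fun Fd :: "nat \<Rightarrow> nat list \<Rightarrow> nat" where
  "Fd L [] = 1"
| "Fd L (t # ts) = (L choose t) * 2 ^ (L - t) * Fd t ts"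

lemma LA_append_iff:
  "ys @ zs \<in> LA A \<longleftrightarrow> ys \<in> LA (A - abs ` set zs) \<and> zs \<in> LA (abs ` set zs) \<and> abs ` set zs \<subseteq> A
      \<and> abs ` set ys \<inter> abs ` set zs = {}"
  unfolding LA_def by auto

lemma count_LA:
  assumes "finite A" "A \<subseteq> {x. x > 0}" "sorted_wrt (>) ts" "\<forall>t\<in>set ts. t < card A"
  shows "card {xs \<in> LA A. desc xs \<subseteq> set ts} = Fd (card A) ts"
  using assms
proof (induction ts arbitrary: A)
  case Nil
  have "{xs \<in> LA A. desc xs \<subseteq> set []} = {xs \<in> LA A. desc xs = {}}" by auto
  thus ?case using LA_desc_empty[OF Nil.prems(1,2)] by simp
next
  case (Cons t ts)
  let ?L = "card A"
  have tL: "t < ?L" using Cons.prems by simp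
  have tsl: "set ts \<subseteq> {..<t}" using Cons.prems(3) by auto
  let ?I = "{B. B \<subseteq> A \<and> card B = ?L - t}"
  let ?X = "\<lambda>B. {ys \<in> LA (A - B). desc ys \<subseteq> set ts}"
  let ?Y = "\<lambda>B. {zs \<in> LA B. sorted_wrt (<) zs}"
  let ?f = "\<lambda>(ys, zs). ys @ zs"
  have decomp: "{xs \<in> LA A. desc xs \<subseteq> set (t # ts)} = (\<Union>B\<in>?I. ?f ` (?X B \<times> ?Y B))"
  proof (intro Set.set_eqI iffI)
    fix xs assume "xs \<in> {xs \<in> LA A. desc xs \<subseteq> set (t # ts)}"
    hence xs: "xs \<in> LA A" "desc xs \<subseteq> insert t (set ts)" by auto
    define ys where "ys = take t xs"
    define zs where "zs = drop t xs"
    define B where "B = abs ` set zs"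
    have lxs: "length xs = ?L" using LA_length[OF xs(1)] .
    have eq: "xs = ys @ zs" unfolding ys_def zs_def by simp
    have lys: "length ys = t" using lxs tL unfolding ys_def by simp
    have zne: "zs \<noteq> []" using lxs tL unfolding zs_def by simp
    have L: "ys \<in> LA (A - B)" "zs \<in> LA B" "B \<subseteq> A" using xs(1) unfolding eq LA_append_iff B_def by auto
    have cB: "card B = ?L - t" using LA_length[OF L(2)] lxs lys eq by simp
    have dz: "distinct zs" using LA_distinct[OF L(2)] .
    have "desc ys \<subseteq> set ts \<and> sorted_wrt (<) zs" using desc_append[OF lys zne tsl dz] xs(2) eq by simp
    hence mem: "(ys, zs) \<in> ?X B \<times> ?Y B" using L by auto
    have "B \<in> ?I" using L cB by auto
    moreover have "xs \<in> ?f ` (?X B \<times> ?Y B)" by (rule image_eqI[where x="(ys,zs)"]) (simp add: eq, rule mem)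
    ultimately show "xs \<in> (\<Union>B\<in>?I. ?f ` (?X B \<times> ?Y B))" by (rule UN_I)
  next
    fix xs assume "xs \<in> (\<Union>B\<in>?I. ?f ` (?X B \<times> ?Y B))"
    then obtain B ys zs where B: "B \<subseteq> A" "card B = ?L - t" and ys: "ys \<in> LA (A - B)" "desc ys \<subseteq> set ts"
      and zs: "zs \<in> LA B" "sorted_wrt (<) zs" and eq: "xs = ys @ zs" by auto
    have fB: "finite B" using B(1) Cons.prems(1) finite_subset by blast
    have lys: "length ys = t" using LA_length[OF ys(1)] B Cons.prems(1) fB tL by (simp add: card_Diff_subset)
    have zne: "zs \<noteq> []" using LA_length[OF zs(1)] B(2) tL by auto
    have Bz: "abs ` set zs = B" "abs ` set ys = A - B" using zs(1) ys(1) unfolding LA_def by auto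
    have "xs \<in> LA A" unfolding eq LA_append_iff Bz using ys zs B by (auto simp: Bz)
    moreover have "desc xs \<subseteq> insert t (set ts)"
      using desc_append[OF lys zne tsl LA_distinct[OF zs(1)]] ys zs eq by simp
    ultimately show "xs \<in> {xs \<in> LA A. desc xs \<subseteq> set (t # ts)}" by simp
  qed
  have finI: "finite ?I" using Cons.prems(1) by simp
  have finP: "\<forall>B\<in>?I. finite (?f ` (?X B \<times> ?Y B))"
  proof
    fix B assume "B \<in> ?I"
    hence "finite B" "finite (A - B)" using Cons.prems(1) finite_subset by auto
    thus "finite (?f ` (?X B \<times> ?Y B))" using finite_LA by auto
  qed
  have disj: "\<forall>B1\<in>?I. \<forall>B2\<in>?I. B1 \<noteq> B2 \<longrightarrow> ?f ` (?X B1 \<times> ?Y B1) \<inter> ?f ` (?X B2 \<times> ?Y B2) = {}"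
  proof (intro ballI impI)
    fix B1 B2 assume B: "B1 \<in> ?I" "B2 \<in> ?I" "B1 \<noteq> B2"
    show "?f ` (?X B1 \<times> ?Y B1) \<inter> ?f ` (?X B2 \<times> ?Y B2) = {}"
    proof (rule ccontr)
      assume "?f ` (?X B1 \<times> ?Y B1) \<inter> ?f ` (?X B2 \<times> ?Y B2) \<noteq> {}"
      then obtain ys1 zs1 ys2 zs2 where h: "ys1 \<in> ?X B1" "zs1 \<in> ?Y B1" "ys2 \<in> ?X B2" "zs2 \<in> ?Y B2"
        "ys1 @ zs1 = ys2 @ zs2" by auto
      have "length ys1 = card (A - B1)" "length ys2 = card (A - B2)" using h LA_length by auto
      moreover have "card (A - B1) = t" "card (A - B2) = t" using B Cons.prems(1) tL
        by (auto simp: card_Diff_subset finite_subset)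
      ultimately have "zs1 = zs2" using h(5) by (simp add: append_eq_append_conv)
      hence "B1 = B2" using h(2,4) unfolding LA_def by auto
      thus False using B(3) by simp
    qed
  qed
  have piece: "card (?f ` (?X B \<times> ?Y B)) = Fd t ts * 2 ^ (?L - t)" if B: "B \<in> ?I" for B
  proof -
    have fB: "finite B" "finite (A - B)" using B Cons.prems(1) finite_subset by auto
    have cAB: "card (A - B) = t" using B Cons.prems(1) tL by (auto simp: card_Diff_subset finite_subset)
    have inj: "inj_on ?f (?X B \<times> ?Y B)"
    proof (rule inj_onI)
      fix a b assume h: "a \<in> ?X B \<times> ?Y B" "b \<in> ?X B \<times> ?Y B" "?f a = ?f b"
      obtain ys1 zs1 where a: "a = (ys1, zs1)" by (cases a)
      obtain ys2 zs2 where b: "b = (ys2, zs2)" by (cases b)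
      have "ys1 \<in> LA (A - B)" "ys2 \<in> LA (A - B)" using h a b by auto
      hence "length ys1 = length ys2" using LA_length by metis
      thus "a = b" using h(3) a b by (simp add: append_eq_append_conv)
    qed
    have "card (?X B) = Fd t ts"
      using Cons.IH[of "A - B"] fB Cons.prems(2,3) cAB tsl by auto
    moreover have "card (?Y B) = 2 ^ (?L - t)"
      using sorted_LA_count[of B] fB B Cons.prems(2) by auto
    ultimately show ?thesis using card_image[OF inj] by (simp add: card_cartesian_product)
  qed
  have "card {xs \<in> LA A. desc xs \<subseteq> set (t # ts)} = (\<Sum>B\<in>?I. card (?f ` (?X B \<times> ?Y B)))"
    unfolding decomp by (rule card_UN_disjoint[OF finI finP disj])
  also have "\<dots> = (\<Sum>B\<in>?I. Fd t ts * 2 ^ (?L - t))" by (rule sum.cong) (use piece in auto)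
  also have "\<dots> = (?L choose t) * (Fd t ts * 2 ^ (?L - t))"
    using n_subsets[OF Cons.prems(1), of "?L - t"] binomial_symmetric[of t ?L] tL by simp
  finally show ?case by simp
qed

definition wl :: "nat \<Rightarrow> (int \<Rightarrow> int) \<Rightarrow> int list" where
  "wl n w = map (\<lambda>i. w (int i)) [1..<Suc n]"

definition lw :: "nat \<Rightarrow> int list \<Rightarrow> int \<Rightarrow> int" where
  "lw n xs j = (if j \<in> SB n then (if j > 0 then xs ! (nat j - 1) else - (xs ! (nat (-j) - 1))) else j)"

lemma SB_iff: "j \<in> SB n \<longleftrightarrow> j \<noteq> 0 \<and> \<bar>j\<bar> \<le> int n"
  unfolding SB_def by auto

lemma finite_SB: "finite (SB n)"
  by (rule finite_subset[of _ "{- int n..int n}"]) (auto simp: SB_def)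

lemma length_wl [simp]: "length (wl n w) = n" unfolding wl_def by simp

lemma wl_nth: "k < n \<Longrightarrow> wl n w ! k = w (int k + 1)"
  unfolding wl_def by (simp del: upt_Suc add: algebra_simps)

lemma SP_props:
  assumes "w \<in> signed_perms n"
  shows "inj_on w (SB n)" "w ` SB n = SB n" "\<And>j. j \<in> SB n \<Longrightarrow> w (-j) = - w j"
    "\<And>j. j \<notin> SB n \<Longrightarrow> w j = j"
  using assms unfolding signed_perms_def bij_betw_def by auto

lemma wl_LA:
  assumes w: "w \<in> signed_perms n"
  shows "wl n w \<in> LA {1..int n}"
proof -
  note P = SP_props[OF w]
  have inSB: "int i \<in> SB n" if "i \<in> {1..<Suc n}" for i using that by (auto simp: SB_iff)
  have wSB: "w j \<in> SB n" if "j \<in> SB n" for j using P(2) that by auto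
  have inj: "inj_on (\<lambda>i. \<bar>w (int i)\<bar>) {1..<Suc n}"
  proof (rule inj_onI)
    fix i j assume ij: "i \<in> {1..<Suc n}" "j \<in> {1..<Suc n}" "\<bar>w (int i)\<bar> = \<bar>w (int j)\<bar>"
    hence "w (int i) = w (int j) \<or> w (int i) = - w (int j)" using abs_eq_iff by blast
    thus "i = j"
    proof
      assume e: "w (int i) = w (int j)"
      have "int i = int j" by (rule inj_onD[OF P(1) e inSB[OF ij(1)] inSB[OF ij(2)]])
      thus ?thesis by simp
    next
      assume h: "w (int i) = - w (int j)"
      have mj: "- int j \<in> SB n" using inSB[OF ij(2)] by (auto simp: SB_iff)
      have "w (int i) = w (- int j)" using h P(3)[OF inSB[OF ij(2)]] by simp
      hence "int i = - int j" by (rule inj_onD[OF P(1) _ inSB[OF ij(1)] mj])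
      thus ?thesis using ij by auto
    qed
  qed
  have d: "distinct (map abs (wl n w))" unfolding wl_def using inj by (simp del: upt_Suc add: distinct_map comp_def)
  have s: "set (wl n w) = (\<lambda>i. w (int i)) ` {1..<Suc n}" unfolding wl_def by (simp del: upt_Suc)
  have a: "abs ` set (wl n w) = {1..int n}"
  proof (intro Set.set_eqI iffI)
    fix m assume "m \<in> abs ` set (wl n w)"
    then obtain i where i: "i \<in> {1..<Suc n}" "m = \<bar>w (int i)\<bar>" using s by auto
    thus "m \<in> {1..int n}" using wSB[OF inSB[OF i(1)]] by (auto simp: SB_iff)
  next
    fix m assume m: "m \<in> {1..int n}"
    hence "m \<in> SB n" by (auto simp: SB_iff)
    then obtain j where j: "j \<in> SB n" "w j = m" using P(2) by (metis imageE)
    show "m \<in> abs ` set (wl n w)"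
    proof (cases "j > 0")
      case True
      hence "nat j \<in> {1..<Suc n}" using j by (auto simp: SB_iff)
      moreover have "int (nat j) = j" using True by simp
      ultimately show ?thesis using s j m by (force simp: image_iff)
    next
      case False
      hence "nat (-j) \<in> {1..<Suc n}" using j by (auto simp: SB_iff)
      moreover have "w (int (nat (-j))) = - m" using False j P(3) by simp
      ultimately show ?thesis using s m by (force simp: image_iff)
    qed
  qed
  have z: "0 \<notin> set (wl n w)" using s wSB inSB by (force simp: SB_iff)
  show ?thesis unfolding LA_def using d a z by simp
qed

lemma lw_wl:
  assumes w: "w \<in> signed_perms n"
  shows "lw n (wl n w) = w"
proof
  fix j
  note P = SP_props[OF w]
  show "lw n (wl n w) j = w j"
  proof (cases "j \<in> SB n")
    case True
    show ?thesis
    proof (cases "j > 0")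
      case True
      hence "nat j - 1 < n" "int (nat j - 1) + 1 = j" using \<open>j \<in> SB n\<close> by (auto simp: SB_iff)
      thus ?thesis using True \<open>j \<in> SB n\<close> unfolding lw_def by (simp add: wl_nth)
    next
      case False
      hence "nat (-j) - 1 < n" "int (nat (-j) - 1) + 1 = -j" using \<open>j \<in> SB n\<close> by (auto simp: SB_iff)
      moreover have "w (-j) = - w j" using P(3)[of j] \<open>j \<in> SB n\<close> by simp
      ultimately show ?thesis using False \<open>j \<in> SB n\<close> unfolding lw_def by (simp add: wl_nth)
    qed
  next
    case False thus ?thesis using P(4) unfolding lw_def by simp
  qed
qed

lemma lw_SP:
  assumes xs: "xs \<in> LA {1..int n}"
  shows "lw n xs \<in> signed_perms n"
proof -
  have len: "length xs = n" using LA_length[OF xs] by simp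
  have dx: "distinct (map abs xs)" "abs ` set xs = {1..int n}" "0 \<notin> set xs" using xs unfolding LA_def by auto
  let ?k = "\<lambda>j::int. nat \<bar>j\<bar> - 1"
  have kl: "?k j < n" if "j \<in> SB n" for j using that by (auto simp: SB_iff)
  have ax: "\<bar>xs ! i\<bar> \<in> {1..int n}" "xs ! i \<noteq> 0" if "i < n" for i
    using that dx len nth_mem by (metis image_eqI) (metis dx(3) len nth_mem that)
  have lwv: "lw n xs j = (if j > 0 then xs ! ?k j else - (xs ! ?k j))" if "j \<in> SB n" for j
    using that unfolding lw_def by (auto simp: SB_iff)
  have inSB: "lw n xs j \<in> SB n" if "j \<in> SB n" for j
    using ax[OF kl[OF that]] lwv[OF that] by (auto simp: SB_iff)
  have inj: "inj_on (lw n xs) (SB n)"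
  proof (rule inj_onI)
    fix i j assume ij: "i \<in> SB n" "j \<in> SB n" "lw n xs i = lw n xs j"
    hence "\<bar>xs ! ?k i\<bar> = \<bar>xs ! ?k j\<bar>" using lwv by (metis abs_minus_cancel)
    hence "map abs xs ! ?k i = map abs xs ! ?k j" using kl ij len by simp
    hence kk: "?k i = ?k j" using nth_eq_iff_index_eq[OF dx(1)] kl ij len by simp
    have "nat \<bar>i\<bar> \<ge> 1" "nat \<bar>j\<bar> \<ge> 1" using ij(1,2) by (auto simp: SB_iff)
    hence "nat \<bar>i\<bar> = nat \<bar>j\<bar>" using kk by linarith
    hence aij: "\<bar>i\<bar> = \<bar>j\<bar>" by simp
    define x where "x = xs ! ?k i"
    have x0: "x \<noteq> 0" using ax kl ij unfolding x_def by blast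
    have li: "lw n xs i = (if i > 0 then x else - x)" using lwv[OF ij(1)] unfolding x_def by simp
    have lj: "lw n xs j = (if j > 0 then x else - x)" using lwv[OF ij(2)] kk unfolding x_def by simp
    have "(i > 0) = (j > 0)" using ij(3) x0 unfolding li lj by (auto split: if_splits)
    thus "i = j" using aij ij(1,2) by (auto simp: SB_iff abs_if split: if_splits)
  qed
  have img: "lw n xs ` SB n = SB n"
    by (rule endo_inj_surj[OF finite_SB]) (use inSB inj in auto)
  have odd: "lw n xs (-j) = - lw n xs j" if "j \<in> SB n" for j
  proof -
    have "-j \<in> SB n" "?k (-j) = ?k j" using that by (auto simp: SB_iff)
    thus ?thesis using lwv[OF that] lwv[of "-j"] that by (auto simp: SB_iff)
  qed
  have fix': "lw n xs j = j" if "j \<notin> SB n" for j using that unfolding lw_def by simp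
  show ?thesis unfolding signed_perms_def bij_betw_def using inj img odd fix' by auto
qed

lemma wl_lw:
  assumes xs: "xs \<in> LA {1..int n}"
  shows "wl n (lw n xs) = xs"
proof -
  have len: "length xs = n" using LA_length[OF xs] by simp
  show ?thesis
  proof (rule nth_equalityI)
    show "length (wl n (lw n xs)) = length xs" using len by simp
    fix i assume "i < length (wl n (lw n xs))"
    hence i: "i < n" by simp
    have "int i + 1 \<in> SB n" using i by (auto simp: SB_iff)
    thus "wl n (lw n xs) ! i = xs ! i" using i unfolding wl_nth[OF i] lw_def by (simp add: nat_add_distrib)
  qed
qed

lemma desc_wl:
  assumes w: "w \<in> signed_perms n"
  shows "descents_B n w = desc (wl n w)"
proof -
  have w0: "w 0 = 0" using SP_props(4)[OF w, of 0] by (simp add: SB_iff)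
  have "(0 # wl n w) ! i = w (int i)" if "i < n" for i
  proof (cases i)
    case 0 thus ?thesis using w0 by simp
  next
    case (Suc k) thus ?thesis using that wl_nth[of k n w] by (simp add: add.commute)
  qed
  thus ?thesis unfolding descents_B_def desc_def using wl_nth by auto
qed

lemma card_transfer:
  "card {w \<in> signed_perms n. Q (descents_B n w)} = card {xs \<in> LA {1..int n}. Q (desc xs)}"
proof (rule bij_betw_same_card, rule bij_betw_byWitness[where f' = "lw n"])
  show "\<forall>a\<in>{w \<in> signed_perms n. Q (descents_B n w)}. lw n (wl n a) = a" using lw_wl by auto
  show "\<forall>a'\<in>{xs \<in> LA {1..int n}. Q (desc xs)}. wl n (lw n a') = a'" using wl_lw by auto
  show "wl n ` {w \<in> signed_perms n. Q (descents_B n w)} \<subseteq> {xs \<in> LA {1..int n}. Q (desc xs)}"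
    using wl_LA desc_wl by auto
  show "lw n ` {xs \<in> LA {1..int n}. Q (desc xs)} \<subseteq> {w \<in> signed_perms n. Q (descents_B n w)}"
  proof clarify
    fix xs assume "xs \<in> LA {1..int n}" "Q (desc xs)"
    thus "lw n xs \<in> signed_perms n \<and> Q (descents_B n (lw n xs))"
      using lw_SP desc_wl[OF lw_SP] wl_lw by auto
  qed
qed

lemma alpha_formula:
  assumes "T \<subseteq> {..<n}"
  shows "card {xs \<in> LA {1..int n}. desc xs \<subseteq> T} = Fd n (rev (sorted_list_of_set T))"
proof -
  have fT: "finite T" using assms finite_subset by blast
  have "card {xs \<in> LA {1..int n}. desc xs \<subseteq> set (rev (sorted_list_of_set T))} = Fd (card {1..int n}) (rev (sorted_list_of_set T))"
    by (rule count_LA) (use fT assms in \<open>auto simp: sorted_wrt_rev\<close>)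
  thus ?thesis using fT by simp
qed

lemma sum_strict_subset:
  assumes "finite (Y::nat set)" "X \<subset> Y" "\<forall>e\<in>Y. e > 0"
  shows "\<Sum>X < \<Sum>Y"
proof -
  obtain b where "b \<in> Y - X" using assms(2) by auto
  thus ?thesis using sum_strict_mono2[OF assms(1), of X b "\<lambda>x. x"] assms by auto
qed

definition XS :: "nat set \<Rightarrow> nat list \<Rightarrow> nat set list set" where
  "XS U ts = {Vs. length Vs = length ts \<and> sorted_wrt (\<lambda>X Y. Y \<subset> X) (U # Vs) \<and> map (\<lambda>V. \<Sum>V) Vs = ts}"

lemma finite_XS: assumes "finite U" shows "finite (XS U ts)"
proof -
  have "XS U ts \<subseteq> {Vs. set Vs \<subseteq> Pow U \<and> length Vs = length ts}" unfolding XS_def by auto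
  moreover have "finite {Vs. set Vs \<subseteq> Pow U \<and> length Vs = length ts}"
    by (rule finite_lists_length_eq) (use assms in simp)
  ultimately show ?thesis by (rule finite_subset)
qed

lemma last_sub: "sorted_wrt (\<lambda>X Y. Y \<subset> X) (V # Vs) \<Longrightarrow> last (V # Vs) \<subseteq> V"
  by (induction Vs arbitrary: V) (auto)

lemma Fd_cong:
  assumes p: "prime p" "odd p"
  assumes "finite U" "U \<subseteq> range (\<lambda>d. p^d)" "sorted_wrt (>) ts" "\<forall>t\<in>set ts. t < \<Sum>U"
  shows "[int (Fd (\<Sum>U) ts) = (\<Sum>Vs\<in>XS U ts. 2 ^ (card U - card (last (U # Vs))))] (mod int p)"
  using assms(3-)
proof (induction ts arbitrary: U)
  case Nil
  have "XS U [] = {[]}" unfolding XS_def by auto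
  thus ?case by simp
next
  case (Cons t ts)
  let ?g = "\<lambda>U Vs. (2::int) ^ (card U - card (last (U # Vs)))"
  let ?I = "{V. V \<subseteq> U \<and> \<Sum>V = t}"
  have tU: "t < \<Sum>U" using Cons.prems by simp
  have p2: "p \<ge> 2" using prime_ge_2_nat p by auto
  have posU: "\<forall>e\<in>U. e > 0" using Cons.prems(2) p2 by auto
  have XSeq: "XS U (t # ts) = (\<Union>V\<in>?I. Cons V ` XS V ts)"
  proof (intro Set.set_eqI iffI)
    fix Ws assume "Ws \<in> XS U (t # ts)"
    then obtain V Vs where W: "Ws = V # Vs" "length Vs = length ts" "sorted_wrt (\<lambda>X Y. Y \<subset> X) (U # V # Vs)"
      "\<Sum>V = t" "map (\<lambda>V. \<Sum>V) Vs = ts" unfolding XS_def by (cases Ws) auto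
    hence "V \<in> ?I" "Vs \<in> XS V ts" unfolding XS_def by auto
    thus "Ws \<in> (\<Union>V\<in>?I. Cons V ` XS V ts)" using W(1) by blast
  next
    fix Ws assume "Ws \<in> (\<Union>V\<in>?I. Cons V ` XS V ts)"
    then obtain V Vs where W: "Ws = V # Vs" "V \<subseteq> U" "\<Sum>V = t" "Vs \<in> XS V ts" by auto
    have "V \<noteq> U" using W(3) tU by auto
    hence VU: "V \<subset> U" using W(2) by auto
    have s: "sorted_wrt (\<lambda>X Y. Y \<subset> X) (V # Vs)" "length Vs = length ts" "map (\<lambda>V. \<Sum>V) Vs = ts"
      using W(4) unfolding XS_def by auto
    have "\<forall>y\<in>set (V # Vs). y \<subset> U" using s(1) VU by auto
    hence "sorted_wrt (\<lambda>X Y. Y \<subset> X) (U # V # Vs)" using s(1) by simp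
    thus "Ws \<in> XS U (t # ts)" unfolding XS_def using W s by simp
  qed
  have finU: "finite V" if "V \<in> ?I" for V using that Cons.prems(1) finite_subset by blast
  have sumeq: "(\<Sum>Ws\<in>XS U (t # ts). ?g U Ws) = (\<Sum>V\<in>?I. (\<Sum>Vs\<in>XS V ts. ?g U (V # Vs)))"
  proof -
    have "(\<Sum>Ws\<in>XS U (t # ts). ?g U Ws) = (\<Sum>V\<in>?I. \<Sum>Ws\<in>Cons V ` XS V ts. ?g U Ws)"
    proof -
      have fI: "finite ?I" using Cons.prems(1) by simp
      have fP: "\<forall>V\<in>?I. finite (Cons V ` XS V ts)" using finite_XS finU by blast
      have dj: "\<forall>V\<in>?I. \<forall>W\<in>?I. V \<noteq> W \<longrightarrow> Cons V ` XS V ts \<inter> Cons W ` XS W ts = {}" by blast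
      show ?thesis unfolding XSeq by (rule sum.UNION_disjoint[OF fI fP dj])
    qed
    also have "\<dots> = (\<Sum>V\<in>?I. (\<Sum>Vs\<in>XS V ts. ?g U (V # Vs)))"
      by (rule sum.cong[OF refl], rule sum.reindex_cong[where l = "Cons V" for V]) (auto simp: inj_on_def)
    finally show ?thesis .
  qed
  have split: "?g U (V # Vs) = 2 ^ (card U - card V) * ?g V Vs" if "V \<in> ?I" "Vs \<in> XS V ts" for V Vs
  proof -
    have "last (V # Vs) \<subseteq> V" using that(2) last_sub unfolding XS_def by auto
    hence "card (last (V # Vs)) \<le> card V" using finU[OF that(1)] card_mono by blast
    moreover have "card V \<le> card U" using that(1) Cons.prems(1) card_mono by blast
    ultimately have "card U - card (last (V # Vs)) = (card U - card V) + (card V - card (last (V # Vs)))" by simp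
    thus ?thesis by (simp add: power_add)
  qed
  have c1: "[(\<Sum>Vs\<in>XS V ts. ?g V Vs) = int (Fd t ts)] (mod int p)" if "V \<in> ?I" for V
  proof -
    have "[int (Fd (\<Sum>V) ts) = (\<Sum>Vs\<in>XS V ts. ?g V Vs)] (mod int p)"
    proof (rule Cons.IH)
      show "finite V" using finU[OF that] .
      show "V \<subseteq> range (\<lambda>d. p^d)" using that Cons.prems(2) by auto
      show "sorted_wrt (>) ts" using Cons.prems(3) by simp
      show "\<forall>s\<in>set ts. s < \<Sum>V" using Cons.prems(3) that by simp
    qed
    thus ?thesis using that by (simp add: cong_sym)
  qed
  have c2: "[(2::int) ^ (card U - card V) = 2 ^ (\<Sum>U - t)] (mod int p)" if "V \<in> ?I" for V
  proof -
    have fV: "finite V" using finU[OF that] .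
    have "\<Sum>U = \<Sum>(U - V) + \<Sum>V" using sum.subset_diff[of V U "\<lambda>x. x"] that Cons.prems(1) by auto
    hence "\<Sum>U - t = \<Sum>(U - V)" using that by simp
    moreover have "card U - card V = card (U - V)" using that Cons.prems(1) by (simp add: card_Diff_subset fV)
    moreover have "[(2::int) ^ (\<Sum>(U - V)) = 2 ^ card (U - V)] (mod int p)"
      by (rule two_pow_sum_cong[OF p]) (use Cons.prems in auto)
    ultimately show ?thesis by (simp add: cong_sym)
  qed
  have f1: "[(\<Sum>Ws\<in>XS U (t # ts). ?g U Ws) = (\<Sum>V\<in>?I. 2 ^ (\<Sum>U - t) * int (Fd t ts))] (mod int p)"
    unfolding sumeq
  proof (rule cong_sum)
    fix V assume V: "V \<in> ?I"
    have "(\<Sum>Vs\<in>XS V ts. ?g U (V # Vs)) = 2 ^ (card U - card V) * (\<Sum>Vs\<in>XS V ts. ?g V Vs)"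
      using split[OF V] by (simp add: sum_distrib_left)
    moreover have "[2 ^ (card U - card V) * (\<Sum>Vs\<in>XS V ts. ?g V Vs) = 2 ^ (\<Sum>U - t) * int (Fd t ts)] (mod int p)"
      by (rule cong_mult[OF c2[OF V] c1[OF V]])
    ultimately show "[(\<Sum>Vs\<in>XS V ts. ?g U (V # Vs)) = 2 ^ (\<Sum>U - t) * int (Fd t ts)] (mod int p)" by simp
  qed
  have f2: "(\<Sum>V\<in>?I. 2 ^ (\<Sum>U - t) * int (Fd t ts)) = int (card ?I) * 2 ^ (\<Sum>U - t) * int (Fd t ts)"
    by simp
  have f3: "[int (card ?I) * 2 ^ (\<Sum>U - t) * int (Fd t ts) = int (Fd (\<Sum>U) (t # ts))] (mod int p)"
  proof -
    have "[int (\<Sum>U choose t) = int (card ?I)] (mod int p)"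
      by (rule choose_sum_cong) (use p Cons.prems in auto)
    hence "[int (card ?I) * 2 ^ (\<Sum>U - t) * int (Fd t ts) = int (\<Sum>U choose t) * 2 ^ (\<Sum>U - t) * int (Fd t ts)] (mod int p)"
      by (intro cong_mult cong_refl) (simp add: cong_sym)
    thus ?thesis by simp
  qed
  show ?case using cong_sym[OF cong_trans[OF f1[unfolded f2] f3]] .
qed

definition Yset :: "nat set \<Rightarrow> nat set \<Rightarrow> nat set list set" where
  "Yset E T = {Us. sorted_wrt (\<subset>) Us \<and> (\<forall>U\<in>set Us. U \<subset> E) \<and> map (\<lambda>V. \<Sum>V) Us = sorted_list_of_set T}"

lemma XS_rev: "XS E (rev (sorted_list_of_set T)) = rev ` Yset E T"
proof (intro Set.set_eqI iffI)
  fix Vs assume "Vs \<in> XS E (rev (sorted_list_of_set T))"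
  hence "rev Vs \<in> Yset E T" unfolding XS_def Yset_def by (auto simp: sorted_wrt_rev rev_map[symmetric])
  thus "Vs \<in> rev ` Yset E T" by (metis image_eqI rev_rev_ident)
next
  fix Vs assume "Vs \<in> rev ` Yset E T"
  then obtain Us where U: "Us \<in> Yset E T" "Vs = rev Us" by auto
  hence m: "map (\<lambda>V. \<Sum>V) Us = sorted_list_of_set T" unfolding Yset_def by auto
  hence l: "length Us = length (sorted_list_of_set T)" by (metis length_map)
  have "map (\<lambda>V. \<Sum>V) (rev Us) = rev (sorted_list_of_set T)" using m by (metis rev_map)
  thus "Vs \<in> XS E (rev (sorted_list_of_set T))" using U l unfolding XS_def Yset_def
    by (auto simp: sorted_wrt_rev)
qed

lemma last_rev_hd: "last (E # rev Us) = hd (Us @ [E])"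
  by (cases Us) auto

lemma finite_Yset: assumes "finite E" shows "finite (Yset E T)"
proof -
  have "Yset E T \<subseteq> {Us. set Us \<subseteq> Pow E \<and> length Us = length (sorted_list_of_set T)}"
    unfolding Yset_def by (auto dest: arg_cong[where f = length])
  moreover have "finite {Us. set Us \<subseteq> Pow E \<and> length Us = length (sorted_list_of_set T)}"
    by (rule finite_lists_length_eq) (use assms in simp)
  ultimately show ?thesis by (rule finite_subset)
qed

lemma alpha_cong:
  assumes p: "prime p" "odd p" and E: "finite E" "E \<subseteq> range (\<lambda>d. p^d)" and n: "n = \<Sum>E"
    and T: "T \<subseteq> {..<n}"
  shows "[int (card {xs \<in> LA {1..int n}. desc xs \<subseteq> T}) =
          (\<Sum>Us\<in>Yset E T. 2 ^ (card E - card (hd (Us @ [E]))))] (mod int p)"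
proof -
  have fT: "finite T" using T finite_subset by blast
  have "[int (Fd (\<Sum>E) (rev (sorted_list_of_set T))) =
      (\<Sum>Vs\<in>XS E (rev (sorted_list_of_set T)). 2 ^ (card E - card (last (E # Vs))))] (mod int p)"
    by (rule Fd_cong[OF p E]) (use fT T n in \<open>auto simp: sorted_wrt_rev\<close>)
  also have "(\<Sum>Vs\<in>XS E (rev (sorted_list_of_set T)). (2::int) ^ (card E - card (last (E # Vs))))
      = (\<Sum>Us\<in>Yset E T. 2 ^ (card E - card (hd (Us @ [E]))))"
    unfolding XS_rev by (rule sum.reindex_cong[where l = rev]) (auto simp: inj_on_def last_rev_hd simp del: last.simps)
  finally show ?thesis using alpha_formula[OF T] n by simp
qed

lemma beta_moebius:
  assumes S: "S \<subseteq> {..<n}"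
  shows "int (card {xs \<in> LA {1..int n}. desc xs = S}) =
    (\<Sum>T\<in>Pow S. (-1) ^ card (S - T) * int (card {xs \<in> LA {1..int n}. desc xs \<subseteq> T}))"
proof (rule moebius_Pow[where a = "\<lambda>T. int (card {xs \<in> LA {1..int n}. desc xs \<subseteq> T})"
      and b = "\<lambda>S. int (card {xs \<in> LA {1..int n}. desc xs = S})"])
  show "finite S" using S finite_subset by blast
  fix T assume T: "T \<subseteq> S"
  have fT: "finite T" by (rule finite_subset[OF T], rule finite_subset[OF S], simp)
  have "{xs \<in> LA {1..int n}. desc xs \<subseteq> T} = (\<Union>R\<in>Pow T. {xs \<in> LA {1..int n}. desc xs = R})" by auto
  hence "card {xs \<in> LA {1..int n}. desc xs \<subseteq> T} = (\<Sum>R\<in>Pow T. card {xs \<in> LA {1..int n}. desc xs = R})"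
    using card_UN_disjoint[of "Pow T" "\<lambda>R. {xs \<in> LA {1..int n}. desc xs = R}"] fT finite_LA[of "{1..int n}"]
    by auto
  thus "int (card {xs \<in> LA {1..int n}. desc xs \<subseteq> T}) = (\<Sum>R\<in>Pow T. int (card {xs \<in> LA {1..int n}. desc xs = R}))"
    by simp
qed

lemma sls_id: "sorted_wrt (<) (l::'a::linorder list) \<Longrightarrow> sorted_list_of_set (set l) = l"
  by (simp add: sorted_list_of_set_sort_remdups strict_sorted_iff distinct_remdups_id sorted_sort_id)

lemma sorted_sums:
  assumes "finite E" "\<forall>e\<in>E. (e::nat) > 0" "sorted_wrt (\<subset>) Us" "\<forall>U\<in>set Us. U \<subset> E"
  shows "sorted_wrt (<) (map (\<lambda>V. \<Sum>V) Us)"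
  unfolding sorted_wrt_map
proof (rule sorted_wrt_mono_rel[OF _ assms(3)])
  fix x y assume xy: "x \<in> set Us" "y \<in> set Us" "x \<subset> y"
  have yE: "y \<subset> E" using xy(2) assms(4) by auto
  have "finite y" using yE assms(1) by (meson finite_subset psubset_imp_subset)
  moreover have "\<forall>e\<in>y. e > 0" using yE assms(2) by auto
  ultimately show "\<Sum>x < \<Sum>y" by (intro sum_strict_subset[OF _ xy(3)])
qed

lemma chains_decomp:
  assumes "finite E" "\<forall>e\<in>E. (e::nat) > 0" "finite S"
  shows "chainsB E S = (\<Union>T\<in>Pow S. Yset E T)"
proof (intro Set.set_eqI iffI)
  fix Us assume "Us \<in> chainsB E S"
  hence U: "sorted_wrt (\<subset>) Us" "\<forall>U\<in>set Us. U \<subset> E \<and> \<Sum>U \<in> S" unfolding chainsB_def by auto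
  let ?l = "map (\<lambda>V. \<Sum>V) Us"
  have "sorted_wrt (<) ?l" using sorted_sums[OF assms(1,2) U(1)] U(2) by auto
  hence "sorted_list_of_set (set ?l) = ?l" by (rule sls_id)
  hence "Us \<in> Yset E (set ?l)" unfolding Yset_def using U by auto
  moreover have "set ?l \<in> Pow S" using U by auto
  ultimately show "Us \<in> (\<Union>T\<in>Pow S. Yset E T)" by blast
next
  fix Us assume "Us \<in> (\<Union>T\<in>Pow S. Yset E T)"
  then obtain T where T: "T \<subseteq> S" "Us \<in> Yset E T" by auto
  have fT: "finite T" using T assms(3) finite_subset by blast
  have "map (\<lambda>V. \<Sum>V) Us = sorted_list_of_set T" using T(2) unfolding Yset_def by auto
  hence "set (map (\<lambda>V. \<Sum>V) Us) = T" using fT by simp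
  thus "Us \<in> chainsB E S" using T unfolding chainsB_def Yset_def by auto
qed

lemma Yset_length: "finite T \<Longrightarrow> Us \<in> Yset E T \<Longrightarrow> length Us = card T"
  unfolding Yset_def by (metis (mono_tags, lifting) length_map length_sorted_list_of_set mem_Collect_eq)

lemma chi_sum:
  assumes "finite E" "\<forall>e\<in>E. (e::nat) > 0" "finite S"
  shows "chiB E S = (\<Sum>T\<in>Pow S. (-1) ^ card T * (\<Sum>Us\<in>Yset E T. 2 ^ (card E - card (hd (Us @ [E])))))"
proof -
  let ?g = "\<lambda>Us. (-1::int) ^ length Us * 2 ^ (card E - card (hd (Us @ [E])))"
  have fP: "\<forall>T\<in>Pow S. finite (Yset E T)" using finite_Yset assms(1) by blast
  have dj: "\<forall>T1\<in>Pow S. \<forall>T2\<in>Pow S. T1 \<noteq> T2 \<longrightarrow> Yset E T1 \<inter> Yset E T2 = {}"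
  proof (intro ballI impI)
    fix T1 T2 assume T: "T1 \<in> Pow S" "T2 \<in> Pow S" "T1 \<noteq> T2"
    have "finite T1" "finite T2" using T assms(3) finite_subset by auto
    hence "sorted_list_of_set T1 \<noteq> sorted_list_of_set T2" using T(3) by (metis set_sorted_list_of_set)
    thus "Yset E T1 \<inter> Yset E T2 = {}" unfolding Yset_def by auto
  qed
  have "chiB E S = (\<Sum>Us\<in>chainsB E S. ?g Us)" unfolding chiB_def by simp
  also have "\<dots> = (\<Sum>T\<in>Pow S. \<Sum>Us\<in>Yset E T. ?g Us)"
    unfolding chains_decomp[OF assms] by (rule sum.UNION_disjoint) (use assms(3) fP dj in auto)
  also have "\<dots> = (\<Sum>T\<in>Pow S. (-1) ^ card T * (\<Sum>Us\<in>Yset E T. 2 ^ (card E - card (hd (Us @ [E])))))"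
  proof (rule sum.cong[OF refl])
    fix T assume "T \<in> Pow S"
    hence fT: "finite T" using assms(3) finite_subset by auto
    show "(\<Sum>Us\<in>Yset E T. ?g Us) = (-1) ^ card T * (\<Sum>Us\<in>Yset E T. 2 ^ (card E - card (hd (Us @ [E]))))"
      unfolding sum_distrib_left by (rule sum.cong) (auto simp: Yset_length[OF fT])
  qed
  finally show ?thesis .
qed

lemma beta_chi_cong:
  assumes p: "prime p" "odd p" and E: "finite E" "E \<subseteq> range (\<lambda>d. p^d)" and n: "n = \<Sum>E"
    and S: "S \<subseteq> {..<n}"
  shows "[int (card {xs \<in> LA {1..int n}. desc xs = S}) = (-1) ^ card S * chiB E S] (mod int p)"
proof -
  have fS: "finite S" using S finite_subset by blast
  have p2: "p \<ge> 2" using prime_ge_2_nat p by auto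
  have posE: "\<forall>e\<in>E. e > 0" using E(2) p2 by auto
  let ?Y = "\<lambda>T. (\<Sum>Us\<in>Yset E T. (2::int) ^ (card E - card (hd (Us @ [E]))))"
  have "[int (card {xs \<in> LA {1..int n}. desc xs = S}) = (\<Sum>T\<in>Pow S. (-1) ^ card (S - T) * ?Y T)] (mod int p)"
    unfolding beta_moebius[OF S]
    by (intro cong_sum cong_mult cong_refl alpha_cong[OF p E n]) (use S in \<open>auto simp: Pow_def\<close>)?
  also have "(\<Sum>T\<in>Pow S. (-1) ^ card (S - T) * ?Y T) = (\<Sum>T\<in>Pow S. (-1) ^ card S * ((-1) ^ card T * ?Y T))"
  proof (rule sum.cong[OF refl])
    fix T assume "T \<in> Pow S"
    hence "card (S - T) + card T = card S" "card T \<le> card S" using fS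
      by (auto simp: card_Diff_subset card_mono finite_subset)
    have sq: "(-1::int) ^ card T * (-1) ^ card T = 1" by (induction "card T") auto
    have "(-1::int) ^ card S = (-1) ^ card (S - T) * (-1) ^ card T"
      by (metis power_add \<open>card (S - T) + card T = card S\<close>)
    hence "(-1::int) ^ card S * (-1) ^ card T = (-1) ^ card (S - T) * ((-1) ^ card T * (-1) ^ card T)"
      by (simp add: mult.assoc)
    hence "(-1::int) ^ card (S - T) = (-1) ^ card S * (-1) ^ card T" using sq by simp
    thus "(-1) ^ card (S - T) * ?Y T = (-1) ^ card S * ((-1) ^ card T * ?Y T)" by simp
  qed
  also have "\<dots> = (-1) ^ card S * (\<Sum>T\<in>Pow S. (-1) ^ card T * ?Y T)" by (rule sum_distrib_left[symmetric])
  also have "\<dots> = (-1) ^ card S * chiB E S" using chi_sum[OF E(1) posE fS] by simp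
  finally show ?thesis .
qed

lemma cd_single: "comp_descents [a] = {}"
  unfolding comp_descents_def by auto

lemma cd_cons:
  assumes "\<beta> \<noteq> []"
  shows "comp_descents (a # \<beta>) = insert a ((+) a ` comp_descents \<beta>)"
proof (intro Set.set_eqI iffI)
  fix x assume "x \<in> comp_descents (a # \<beta>)"
  then obtain j where j: "1 \<le> j" "j < length (a # \<beta>)" "x = sum_list (take j (a # \<beta>))"
    unfolding comp_descents_def by auto
  obtain j' where j': "j = Suc j'" using j(1) by (cases j) auto
  show "x \<in> insert a ((+) a ` comp_descents \<beta>)"
  proof (cases "j' = 0")
    case True thus ?thesis using j j' by simp
  next
    case False
    hence "sum_list (take j' \<beta>) \<in> comp_descents \<beta>" using j j' unfolding comp_descents_def by auto
    thus ?thesis using j j' by auto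
  qed
next
  fix x assume "x \<in> insert a ((+) a ` comp_descents \<beta>)"
  thus "x \<in> comp_descents (a # \<beta>)"
  proof
    assume "x = a"
    moreover have "sum_list (take 1 (a # \<beta>)) = a" by simp
    moreover have "1 < length (a # \<beta>)" using assms by simp
    ultimately show ?thesis unfolding comp_descents_def by force
  next
    assume "x \<in> (+) a ` comp_descents \<beta>"
    then obtain j where j: "1 \<le> j" "j < length \<beta>" "x = a + sum_list (take j \<beta>)"
      unfolding comp_descents_def by auto
    hence "x = sum_list (take (Suc j) (a # \<beta>))" "1 \<le> Suc j" "Suc j < length (a # \<beta>)" by auto
    thus ?thesis unfolding comp_descents_def by blast
  qed
qed

lemma cd_pos:
  assumes "\<forall>x\<in>set \<beta>. 0 < x" "x \<in> comp_descents \<beta>"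
  shows "x > (0::nat)"
proof -
  obtain j where j: "1 \<le> j" "j < length \<beta>" "x = sum_list (take j \<beta>)"
    using assms(2) unfolding comp_descents_def by auto
  have "\<beta> ! 0 \<in> set (take j \<beta>)" using j by (simp add: in_set_conv_nth) (rule exI[where x=0], auto)
  moreover have "\<beta> ! 0 \<in> set \<beta>" using j by (intro nth_mem) auto
  hence "\<beta> ! 0 > 0" using assms(1) by blast
  ultimately show ?thesis using member_le_sum_list[of "\<beta> ! 0" "take j \<beta>"] j(3) by linarith
qed

lemma pc_cons: "pseudo_comp n (a # \<beta>) \<longleftrightarrow> (\<forall>x\<in>set \<beta>. 0 < x) \<and> a + sum_list \<beta> = n"
  unfolding pseudo_comp_def by auto

lemma cd_inj:
  "pseudo_comp n \<alpha> \<Longrightarrow> pseudo_comp n \<alpha>' \<Longrightarrow> comp_descents \<alpha> = comp_descents \<alpha>' \<Longrightarrow> \<alpha> = \<alpha>'"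
proof (induction \<alpha> arbitrary: n \<alpha>')
  case Nil thus ?case unfolding pseudo_comp_def by simp
next
  case (Cons a \<beta>)
  obtain a' \<beta>' where a': "\<alpha>' = a' # \<beta>'" using Cons.prems(2) unfolding pseudo_comp_def by (cases \<alpha>') auto
  have P: "\<forall>x\<in>set \<beta>. 0 < x" "a + sum_list \<beta> = n" using Cons.prems(1) pc_cons by auto
  have P': "\<forall>x\<in>set \<beta>'. 0 < x" "a' + sum_list \<beta>' = n" using Cons.prems(2) pc_cons a' by auto
  show ?case
  proof (cases "\<beta> = []")
    case True
    hence "comp_descents \<alpha>' = {}" using Cons.prems(3) cd_single by simp
    hence "\<beta>' = []" using a' cd_cons by fastforce
    thus ?thesis using True a' P P' by simp
  next
    case False
    hence "\<beta>' \<noteq> []" using Cons.prems(3) cd_cons[OF False] a' cd_single by force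
    note cc = cd_cons[OF False, of a] cd_cons[OF this, of a']
    have lo: "\<forall>x\<in>comp_descents (a # \<beta>). a \<le> x" using cc(1) by auto
    have lo': "\<forall>x\<in>comp_descents (a' # \<beta>'). a' \<le> x" using cc(2) by auto
    have aa: "a = a'" using lo lo' cc Cons.prems(3) a' by (metis insertI1 order_antisym)
    have gt: "\<forall>x\<in>(+) a ` comp_descents \<beta>. x > a" "\<forall>x\<in>(+) a ` comp_descents \<beta>'. x > a"
      using cd_pos P(1) P'(1) by auto
    have "(+) a ` comp_descents \<beta> = comp_descents (a # \<beta>) - {a}" using cc(1) gt(1) by auto
    also have "\<dots> = (+) a ` comp_descents \<beta>'" using Cons.prems(3) a' aa cc(2) gt(2) by auto
    finally have ie: "(+) a ` comp_descents \<beta> = (+) a ` comp_descents \<beta>'" .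
    have inj: "inj ((+) (a::nat))" by (simp add: inj_def)
    have "comp_descents \<beta> = comp_descents \<beta>'" using inj_image_eq_iff[OF inj] ie by blast
    moreover have "pseudo_comp (n - a) \<beta>" "pseudo_comp (n - a) \<beta>'"
      using False \<open>\<beta>' \<noteq> []\<close> P P' aa unfolding pseudo_comp_def by (auto dest: list.set_sel(2))
    ultimately have "\<beta> = \<beta>'" using Cons.IH by blast
    thus ?thesis using a' aa by simp
  qed
qed

lemma cd_surj:
  "S \<subseteq> {..<n} \<Longrightarrow> \<exists>\<alpha>. pseudo_comp n \<alpha> \<and> comp_descents \<alpha> = S"
proof (induction "card S" arbitrary: S n rule: less_induct)
  case less
  have fS: "finite S" using less.prems finite_subset by blast
  show ?case
  proof (cases "S = {}")
    case True
    have "pseudo_comp n [n]" unfolding pseudo_comp_def by simp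
    thus ?thesis using True cd_single by blast
  next
    case False
    define a where "a = Min S"
    have aS: "a \<in> S" "\<forall>x\<in>S. a \<le> x" using fS False unfolding a_def by auto
    have an: "a < n" using aS less.prems by auto
    define S' where "S' = (\<lambda>x. x - a) ` (S - {a})"
    have injS: "inj_on (\<lambda>x. x - a) (S - {a})" using aS by (auto simp: inj_on_def)
    have cS': "card S' < card S" unfolding S'_def card_image[OF injS] by (rule card_Diff1_less[OF fS aS(1)])
    have sub: "S' \<subseteq> {..<n - a}"
    proof
      fix y assume "y \<in> S'"
      then obtain x where x: "x \<in> S" "y = x - a" unfolding S'_def by auto
      have "x < n" using x(1) less.prems by auto
      thus "y \<in> {..<n - a}" using x aS by (simp add: diff_less_mono)
    qed
    obtain \<beta> where \<beta>: "pseudo_comp (n - a) \<beta>" "comp_descents \<beta> = S'" using less.hyps[OF cS' sub] by blast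
    have z: "0 \<notin> S'" unfolding S'_def using aS by force
    have bne: "\<beta> \<noteq> []" using \<beta>(1) unfolding pseudo_comp_def by simp
    have hd: "hd \<beta> > 0"
    proof (cases "length \<beta> \<ge> 2")
      case True
      have "sum_list (take 1 \<beta>) \<in> comp_descents \<beta>" using True unfolding comp_descents_def by force
      moreover have "sum_list (take 1 \<beta>) = hd \<beta>" using bne by (cases \<beta>) auto
      ultimately show ?thesis using z \<beta>(2) by (metis gr0I)
    next
      case False
      moreover have "length \<beta> \<noteq> 0" using bne by simp
      ultimately have "length \<beta> = 1" by linarith
      hence "\<beta> = [hd \<beta>]" using bne by (cases \<beta>) auto
      hence "hd \<beta> = n - a" using \<beta>(1) unfolding pseudo_comp_def by (metis list.sel(1) sum_list.Cons sum_list.Nil add_0_right)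
      thus ?thesis using an by simp
    qed
    have pos: "\<forall>x\<in>set \<beta>. 0 < x" using hd \<beta>(1) bne unfolding pseudo_comp_def by (cases \<beta>) auto
    have "pseudo_comp n (a # \<beta>)" using pos \<beta>(1) an unfolding pseudo_comp_def by auto
    moreover have "comp_descents (a # \<beta>) = S"
    proof -
      have "comp_descents (a # \<beta>) = insert a ((+) a ` S')" using cd_cons[OF bne] \<beta>(2) by simp
      also have "(+) a ` S' = S - {a}" unfolding S'_def image_image using aS
        by (auto simp: image_iff)
      finally show ?thesis using aS by auto
    qed
    ultimately show ?thesis by blast
  qed
qed

lemma cd_card:
  "card {\<alpha>. pseudo_comp n \<alpha> \<and> Q (comp_descents \<alpha>)} = card {S \<in> Pow {..<n}. Q S}"
proof -
  have sub: "comp_descents \<alpha> \<subseteq> {..<n}" if "pseudo_comp n \<alpha>" for \<alpha>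
  proof
    fix x assume "x \<in> comp_descents \<alpha>"
    then obtain j where j: "1 \<le> j" "j < length \<alpha>" "x = sum_list (take j \<alpha>)"
      unfolding comp_descents_def by auto
    have "\<alpha> ! j \<in> set (tl \<alpha>)" using j by (cases \<alpha>) (auto simp: nth_Cons split: nat.split)
    hence "\<alpha> ! j > 0" using that unfolding pseudo_comp_def by auto
    moreover have "\<alpha> ! j \<le> sum_list (drop j \<alpha>)" using j by (intro member_le_sum_list) (simp add: in_set_conv_nth, rule exI[where x=0], auto)
    moreover have "sum_list (take j \<alpha>) + sum_list (drop j \<alpha>) = n" using that unfolding pseudo_comp_def
      by (metis sum_list_append append_take_drop_id)
    ultimately show "x \<in> {..<n}" using j by simp
  qed
  have inj: "inj_on comp_descents {\<alpha>. pseudo_comp n \<alpha> \<and> Q (comp_descents \<alpha>)}"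
    using cd_inj by (auto simp: inj_on_def)
  have img: "comp_descents ` {\<alpha>. pseudo_comp n \<alpha> \<and> Q (comp_descents \<alpha>)} = {S \<in> Pow {..<n}. Q S}"
  proof (intro Set.set_eqI iffI)
    fix S assume "S \<in> comp_descents ` {\<alpha>. pseudo_comp n \<alpha> \<and> Q (comp_descents \<alpha>)}"
    thus "S \<in> {S \<in> Pow {..<n}. Q S}" using sub by auto
  next
    fix S assume S: "S \<in> {S \<in> Pow {..<n}. Q S}"
    then obtain \<alpha> where "pseudo_comp n \<alpha>" "comp_descents \<alpha> = S" using cd_surj by blast
    thus "S \<in> comp_descents ` {\<alpha>. pseudo_comp n \<alpha> \<and> Q (comp_descents \<alpha>)}" using S by auto
  qed
  show ?thesis using card_image[OF inj] img by simp
qed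

lemma card_filter_sum:
  assumes "finite A"
  shows "card {x \<in> A. \<phi> x} = (\<Sum>x\<in>A. if \<phi> x then 1 else 0)"
  using sum.inter_filter[OF assms, of "\<lambda>_. 1::nat" \<phi>] by simp

lemma sum_Pow_union:
  assumes "finite P" "finite Q" "P \<inter> Q = {}"
  shows "(\<Sum>S\<in>Pow (P \<union> Q). f S) = (\<Sum>T\<in>Pow P. \<Sum>R\<in>Pow Q. f (T \<union> R))"
proof -
  have "(\<Sum>S\<in>Pow (P \<union> Q). f S) = (\<Sum>(T, R)\<in>Pow P \<times> Pow Q. f (T \<union> R))"
    by (rule sum.reindex_bij_witness[where j = "\<lambda>S. (S \<inter> P, S \<inter> Q)" and i = "\<lambda>(T, R). T \<union> R"])
       (use assms(3) in \<open>auto simp: Int_Un_distrib[symmetric] Int_absorb2\<close>)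
  also have "\<dots> = (\<Sum>T\<in>Pow P. \<Sum>R\<in>Pow Q. f (T \<union> R))" by (rule sum.cartesian_product[symmetric])
  finally show ?thesis .
qed

lemma chi_restrict:
  assumes "\<And>U. U \<subset> E \<Longrightarrow> \<Sum>U \<in> P"
  shows "chiB E S = chiB E (S \<inter> P)"
proof -
  have "chainsB E S = chainsB E (S \<inter> P)" unfolding chainsB_def using assms by auto
  thus ?thesis unfolding chiB_def by simp
qed

lemma neg_cong_iff: "[- (c::int) = i] (mod m) \<longleftrightarrow> [c = - i] (mod m)"
  using cong_minus_minus_iff[of c "- i" m] by simp

theorem corollary4p7:
  fixes p :: nat and D :: "nat set" and i :: int
  assumes "prime p" and "odd p" and "finite D" and "card D > 1"
  defines "n \<equiv> \<Sum>d\<in>D. p ^ d"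
      and "k \<equiv> card D"
      and "E \<equiv> (\<lambda>d. p ^ d) ` D"
  defines "P \<equiv> {\<Sum>U | U. U \<subset> E}"
  shows "cB p i n =
    (if [i = 0] (mod int p)
     then 2 ^ (n + 1 - 2 ^ k) * card {T. T \<subseteq> P \<and> [chiB E T = i] (mod int p)}
     else 2 ^ (n - 2 ^ k) * card {T. T \<subseteq> P \<and> ([chiB E T = i] (mod int p) \<or> [chiB E T = - i] (mod int p))})"
proof -
  note pr = assms(1,2)
  have p2: "p \<ge> 2" using prime_ge_2_nat assms(1) by auto
  have p3: "p \<ge> 3" using p2 assms(2) by (cases "p = 2") auto
  have fE: "finite E" unfolding E_def using assms(3) by simp
  have Er: "E \<subseteq> range (\<lambda>d. p^d)" unfolding E_def by auto
  have posE: "\<forall>e\<in>E. e > 0" using Er p2 by auto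
  have nE: "n = \<Sum>E" unfolding n_def E_def using sum_pow_image[OF p2, of D] by (simp add: psum_def)
  have injD: "inj_on (\<lambda>d. p^d) D" using p2 by (auto simp: inj_on_def)
  have kE: "card E = k" unfolding E_def k_def using card_image[OF injD] .
  have injS: "inj_on (\<lambda>U. \<Sum>U) {U. U \<subset> E}"
    using sum_inj_PowE[OF p2 assms(3)] unfolding E_def[symmetric] by (rule inj_on_subset) auto
  have Pimg: "P = (\<lambda>U. \<Sum>U) ` {U. U \<subset> E}" unfolding P_def by auto
  have cardP: "card P = 2 ^ k - 1"
  proof -
    have "{U. U \<subset> E} = Pow E - {E}" by auto
    hence "card {U. U \<subset> E} = 2 ^ card E - 1" using fE by (simp add: card_Pow card_Diff_singleton)
    thus ?thesis unfolding Pimg card_image[OF injS] kE .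
  qed
  have PinE: "\<And>U. U \<subset> E \<Longrightarrow> \<Sum>U \<in> P" unfolding P_def by auto
  have Psub: "P \<subseteq> {..<n}"
  proof
    fix x assume "x \<in> P"
    then obtain U where "U \<subset> E" "x = \<Sum>U" unfolding P_def by auto
    thus "x \<in> {..<n}" using sum_strict_subset[OF fE _ posE] nE by auto
  qed
  define Q where "Q = {..<n} - P"
  have fP: "finite P" using Psub finite_subset by blast
  have fQ: "finite Q" unfolding Q_def by simp
  have PQ: "P \<union> Q = {..<n}" "P \<inter> Q = {}" unfolding Q_def using Psub by auto
  have Qne: "Q \<noteq> {}"
  proof -
    define m where "m = Max D"
    have Dne: "D \<noteq> {}" using assms(4) by auto
    have mD: "m \<in> D" unfolding m_def using Dne assms(3) by simp
    have m1: "m \<ge> 1"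
    proof (rule ccontr)
      assume "\<not> m \<ge> 1"
      hence "D \<subseteq> {0}" unfolding m_def using assms(3) Dne by (auto simp: Max_ge_iff)
      hence "card D \<le> 1" using card_mono[of "{0}" D] by simp
      thus False using assms(4) by simp
    qed
    define w where "w = p ^ m - 1"
    have "p ^ m \<le> n" unfolding n_def by (rule member_le_sum[OF mD]) (use assms(3) in auto)
    moreover have "p ^ m > 0" using p2 by simp
    ultimately have wn: "w < n" unfolding w_def by linarith
    have wmod: "w mod p = p - 1"
    proof -
      have "p ^ m = p * p ^ (m - 1)" using m1 by (metis Suc_diff_1 less_le_trans zero_less_one power_Suc)
      hence "w = p * (p ^ (m - 1) - 1) + (p - 1)" unfolding w_def using p2
        by (simp add: algebra_simps right_diff_distrib')
      hence "w mod p = (p - 1) mod p" by (simp only: mod_mult_self4)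
      thus ?thesis using p2 by simp
    qed
    have "w \<notin> P"
    proof
      assume "w \<in> P"
      then obtain U where "U \<subset> E" "w = \<Sum>U" unfolding P_def by auto
      hence "w mod p \<le> 1" using sum_mod_PowE[OF p2 assms(3), of U] unfolding E_def by auto
      thus False using wmod p3 by simp
    qed
    thus ?thesis unfolding Q_def using wn by auto
  qed
  have cardQ: "card Q = n - (2 ^ k - 1)" unfolding Q_def using Psub cardP by (simp add: card_Diff_subset fP)
  have cQpos: "card Q \<ge> 1" using Qne fQ by (simp add: Suc_le_eq card_gt_0_iff)
  have cQ1: "card Q = n + 1 - 2 ^ k" using cardQ cQpos by simp
  have cQ2: "card Q - 1 = n - 2 ^ k" using cardQ cQpos by simp
  define \<psi> where "\<psi> = (\<lambda>S. [(-1) ^ card S * chiB E S = i] (mod int p))"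
  have step1: "cB p i n = card {S \<in> Pow {..<n}. \<psi> S}"
  proof -
    have "cB p i n = card {\<alpha>. pseudo_comp n \<alpha> \<and>
        (\<lambda>S. [int (card {xs \<in> LA {1..int n}. desc xs = S}) = i] (mod int p)) (comp_descents \<alpha>)}"
      unfolding cB_def ribbonB_def using card_transfer[of n "\<lambda>X. X = comp_descents _"] by simp
    also have "\<dots> = card {S \<in> Pow {..<n}. [int (card {xs \<in> LA {1..int n}. desc xs = S}) = i] (mod int p)}"
      by (rule cd_card)
    also have "{S \<in> Pow {..<n}. [int (card {xs \<in> LA {1..int n}. desc xs = S}) = i] (mod int p)} = {S \<in> Pow {..<n}. \<psi> S}"
    proof (intro Set.set_eqI iffI)
      fix S assume "S \<in> {S \<in> Pow {..<n}. [int (card {xs \<in> LA {1..int n}. desc xs = S}) = i] (mod int p)}"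
      thus "S \<in> {S \<in> Pow {..<n}. \<psi> S}" unfolding \<psi>_def using beta_chi_cong[OF pr fE Er nE, of S]
        by (auto intro: cong_trans cong_sym)
    next
      fix S assume "S \<in> {S \<in> Pow {..<n}. \<psi> S}"
      thus "S \<in> {S \<in> Pow {..<n}. [int (card {xs \<in> LA {1..int n}. desc xs = S}) = i] (mod int p)}"
        unfolding \<psi>_def using beta_chi_cong[OF pr fE Er nE, of S] by (auto intro: cong_trans)
    qed
    finally show ?thesis .
  qed
  define ind where "ind = (\<lambda>T. (if [chiB E T = i] (mod int p) then 1 else 0) + (if [chiB E T = - i] (mod int p) then 1 else (0::nat)))"
  have inner: "(\<Sum>R\<in>Pow Q. if \<psi> (T \<union> R) then 1 else 0) = 2 ^ (card Q - 1) * ind T" if T: "T \<subseteq> P" for T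
  proof -
    define c where "c = chiB E T"
    define G where "G = (\<lambda>b. if [(-1) ^ card T * (if b then 1 else -1) * c = i] (mod int p) then 1 else (0::nat))"
    have "(\<Sum>R\<in>Pow Q. if \<psi> (T \<union> R) then 1 else 0) = (\<Sum>R\<in>Pow Q. G (even (card R)))"
    proof (rule sum.cong[OF refl])
      fix R assume R: "R \<in> Pow Q"
      have fR: "finite R" "finite T" using R T fQ fP finite_subset by auto
      have cTR: "card (T \<union> R) = card T + card R" using R T PQ(2) fR by (subst card_Un_disjoint) auto
      have chi: "chiB E (T \<union> R) = c" unfolding c_def
      proof -
        have "(T \<union> R) \<inter> P = T" using R T PQ(2) by auto
        thus "chiB E (T \<union> R) = chiB E T" using chi_restrict[of E P "T \<union> R", OF PinE] by simp
      qed
      show "(if \<psi> (T \<union> R) then 1 else 0) = G (even (card R))"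
        unfolding \<psi>_def G_def cTR chi by (simp add: power_add minus_one_power_iff mult.assoc)
    qed
    also have "\<dots> = 2 ^ (card Q - 1) * (G True + G False)" by (rule sum_Pow_parity[OF fQ Qne])
    also have "G True + G False = ind T"
      unfolding G_def ind_def c_def by (cases "even (card T)") (auto simp: neg_cong_iff)
    finally show ?thesis .
  qed
  have "card {S \<in> Pow {..<n}. \<psi> S} = (\<Sum>S\<in>Pow (P \<union> Q). if \<psi> S then 1 else 0)"
    using card_filter_sum[of "Pow {..<n}" \<psi>] PQ(1) by simp
  also have "\<dots> = (\<Sum>T\<in>Pow P. \<Sum>R\<in>Pow Q. if \<psi> (T \<union> R) then 1 else 0)"
    by (rule sum_Pow_union[OF fP fQ PQ(2)])
  also have "\<dots> = (\<Sum>T\<in>Pow P. 2 ^ (card Q - 1) * ind T)" by (rule sum.cong) (use inner in auto)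
  finally have cnt: "cB p i n = 2 ^ (card Q - 1) * (\<Sum>T\<in>Pow P. ind T)" using step1 by (simp add: sum_distrib_left)
  show ?thesis
  proof (cases "[i = 0] (mod int p)")
    case True
    have ii: "[c = - i] (mod int p) \<longleftrightarrow> [c = i] (mod int p)" for c
    proof -
      have "[- i = 0] (mod int p)" using True by (metis cong_minus_minus_iff minus_zero)
      thus ?thesis using True by (meson cong_sym cong_trans)
    qed
    have "(\<Sum>T\<in>Pow P. ind T) = 2 * (\<Sum>T\<in>Pow P. if [chiB E T = i] (mod int p) then 1 else 0)"
      unfolding ind_def ii sum_distrib_left by (rule sum.cong) auto
    also have "(\<Sum>T\<in>Pow P. if [chiB E T = i] (mod int p) then 1 else 0) = card {T. T \<subseteq> P \<and> [chiB E T = i] (mod int p)}"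
      using card_filter_sum[of "Pow P" "\<lambda>T. [chiB E T = i] (mod int p)"] fP by simp
    finally have "cB p i n = 2 ^ (card Q - 1) * 2 * card {T. T \<subseteq> P \<and> [chiB E T = i] (mod int p)}"
      using cnt by simp
    also have "2 ^ (card Q - 1) * 2 = (2::nat) ^ (n + 1 - 2 ^ k)" using cQ1 cQpos
      by (metis Suc_diff_1 less_le_trans zero_less_one power_Suc mult.commute)
    finally show ?thesis using True by simp
  next
    case False
    have excl: "\<not> ([c = i] (mod int p) \<and> [c = - i] (mod int p))" for c
    proof
      assume h: "[c = i] (mod int p) \<and> [c = - i] (mod int p)"
      hence "[i = - i] (mod int p)" by (meson cong_sym cong_trans)
      hence "int p dvd (i - - i)" by (simp add: cong_iff_dvd_diff)
      hence "int p dvd 2 * i" by simp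
      moreover have "prime (int p)" using assms(1) by simp
      moreover have "\<not> int p dvd 2"
      proof
        assume "int p dvd 2"
        hence "p dvd 2" by presburger
        thus False using p3 by (auto dest: dvd_imp_le)
      qed
      ultimately have "int p dvd i" using prime_dvd_mult_iff by blast
      thus False using False by (simp add: cong_0_iff)
    qed
    have "(\<Sum>T\<in>Pow P. ind T) = (\<Sum>T\<in>Pow P. if [chiB E T = i] (mod int p) \<or> [chiB E T = - i] (mod int p) then 1 else 0)"
      unfolding ind_def by (rule sum.cong) (use excl in auto)
    also have "\<dots> = card {T. T \<subseteq> P \<and> ([chiB E T = i] (mod int p) \<or> [chiB E T = - i] (mod int p))}"
      using card_filter_sum[of "Pow P" "\<lambda>T. [chiB E T = i] (mod int p) \<or> [chiB E T = - i] (mod int p)"] fP by simp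
    finally show ?thesis using cnt cQ2 False by simp
  qed
qed

end
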